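(* Let $(H,\alpha_H)$ be an object of $\overline{\mathcal H}^{i,j}(Vec_\Bbbk)$, and let $m_H:H\otimes H\to H$ (written $a\otimes b\mapsto ab$) and $\eta_H:\Bbbk\to H$ (with $\eta_H(1)=1_H$) be morphisms in $\overline{\mathcal H}^{i,j}(Vec_\Bbbk)$. For the functor $\ddot H=-\otimes H$, $(X,\alpha_X)\mapsto(X\otimes H,\alpha_X\otimes\alpha_H)$, define $\ddot H_2(X,Y):(X\otimes H)\otimes(Y\otimes H)\to(X\otimes Y)\otimes H$, $(x\otimes a)\otimes(y\otimes b)\mapsto(x\otimes y)\otimes\alpha_H^i(a)\alpha_H^j(b)$, and $\ddot H_0:\Bbbk\to\Bbbk\otimes H$, $\lambda\mapsto\lambda\otimes 1_H$. Then $(\ddot H,\ddot H_2,\ddot H_0)$ is a monoidal functor on $\overline{\mathcal H}^{i,j}(Vec_\Bbbk)$ if and only if $(H,\alpha_H,m_H,\eta_H)$ is a Hom-algebra.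
   Context: $\Bbbk$ is a field of characteristic $0$; all vector spaces are finite-dimensional; $i,j$ are fixed integers. $\overline{\mathcal H}^{i,j}(Vec_\Bbbk)$ is the monoidal category whose objects are pairs $(X,\alpha_X)$ with $X$ a finite-dimensional $\Bbbk$-space and $\alpha_X$ a linear automorphism; morphisms are linear maps commuting with the $\alpha$'s; $(X,\alpha_X)\otimes(Y,\alpha_Y)=(X\otimes Y,\alpha_X\otimes\alpha_Y)$, unit $(\Bbbk,\mathrm{id})$; associativity $a_{X,Y,Z}((x\otimes y)\otimes z)=\alpha_X^{i+1}(x)\otimes(y\otimes\alpha_Z^{-j-1}(z))$; $l_X(\lambda\otimes x)=\lambda\alpha_X^{j+1}(x)$, $r_X(x\otimes\lambda)=\lambda\alpha_X^{i+1}(x)$. A Hom-algebra $(A,\mu,1_A,\alpha)$ satisfies $\alpha(a)(bc)=(ab)\alpha(c)$, $\alpha(1_A)=1_A$, $1_Aa=a1_A=\alpha(a)$. A monoidal functor $(G,G_2,G_0)$ has natural $G_2(X,Y):GX\otimes GY\to G(X\otimes Y)$ and $G_0:I\to GI$ with $G_2(X,Y\otimes Z)\circ(\mathrm{id}\otimes G_2(Y,Z))\circ a_{GX,GY,GZ}=G(a_{X,Y,Z})\circ G_2(X\otimes Y,Z)\circ(G_2(X,Y)\otimes\mathrm{id})$ and $G(r_X)\circ G_2(X,I)\circ(\mathrm{id}\otimes G_0)\circ r_{GX}^{-1}=\mathrm{id}=G(l_X)\circ G_2(I,X)\circ(G_0\otimes\mathrm{id})\circ l_{GX}^{-1}$.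 *)

theory Defs
  imports "Jordan_Normal_Form.Matrix"
begin

text \<open>Concrete model of the category H-bar^{i,j}(Vec_k): a finite-dimensional space is
  k^n (column vectors), an object is given by its automorphism alpha_X, an invertible
  n x n matrix; morphisms are matrices commuting with the alphas.  The tensor product
  k^n (x) k^m is identified with k^(n*m) via the basis e_p (x) e_q |-> e_(p*m+q),
  i.e. tensor products of matrices/vectors are Kronecker products.  With this encoding
  the canonical reassociation (X(x)Y)(x)Z = X(x)(Y(x)Z) and k(x)X = X = X(x)k are the
  identity on coordinates.\<close>

definition kron :: "'a::semiring_1 mat \<Rightarrow> 'a mat \<Rightarrow> 'a mat" where
  "kron A B = mat (dim_row A * dim_row B) (dim_col A * dim_col B)
     (\<lambda>(r, c). A $$ (r div dim_row B, c div dim_col B) * B $$ (r mod dim_row B, c mod dim_col B))"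

definition vkron :: "'a::semiring_1 vec \<Rightarrow> 'a vec \<Rightarrow> 'a vec" where
  "vkron x y = vec (dim_vec x * dim_vec y) (\<lambda>k. x $ (k div dim_vec y) * y $ (k mod dim_vec y))"

definition inv_mat :: "'a::semiring_1 mat \<Rightarrow> 'a mat" where
  "inv_mat A = (SOME B. B \<in> carrier_mat (dim_row A) (dim_row A) \<and> inverts_mat A B \<and> inverts_mat B A)"

definition mpow_int :: "'a::semiring_1 mat \<Rightarrow> int \<Rightarrow> 'a mat" where
  "mpow_int A k = (if k \<ge> 0 then A ^\<^sub>m nat k else inv_mat A ^\<^sub>m nat (- k))"

definition is_obj :: "'a::field_char_0 mat \<Rightarrow> bool" where
  "is_obj A \<longleftrightarrow> A \<in> carrier_mat (dim_row A) (dim_row A) \<and> invertible_mat A"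

definition is_mor :: "'a::field_char_0 mat \<Rightarrow> 'a mat \<Rightarrow> 'a mat \<Rightarrow> bool" where
  "is_mor X Y f \<longleftrightarrow> f \<in> carrier_mat (dim_row Y) (dim_row X) \<and> f * X = Y * f"

definition unit_obj :: "'a::field_char_0 mat" where
  "unit_obj = 1\<^sub>m 1"

definition assoc_mat :: "int \<Rightarrow> int \<Rightarrow> 'a::field_char_0 mat \<Rightarrow> 'a mat \<Rightarrow> 'a mat \<Rightarrow> 'a mat" where
  "assoc_mat i j X Y Z = kron (kron (mpow_int X (i + 1)) (1\<^sub>m (dim_row Y))) (mpow_int Z (- j - 1))"

definition lunit_mat :: "int \<Rightarrow> 'a::field_char_0 mat \<Rightarrow> 'a mat" where
  "lunit_mat j X = mpow_int X (j + 1)"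

definition runit_mat :: "int \<Rightarrow> 'a::field_char_0 mat \<Rightarrow> 'a mat" where
  "runit_mat i X = mpow_int X (i + 1)"

definition hmul :: "'a::field_char_0 mat \<Rightarrow> 'a vec \<Rightarrow> 'a vec \<Rightarrow> 'a vec" where
  "hmul mH a b = mH *\<^sub>v vkron a b"

definition hone :: "'a::field_char_0 mat \<Rightarrow> 'a vec" where
  "hone etaH = etaH *\<^sub>v vec 1 (\<lambda>_. 1)"

definition hom_algebra :: "'a::field_char_0 mat \<Rightarrow> 'a mat \<Rightarrow> 'a mat \<Rightarrow> bool" where
  "hom_algebra aH mH etaH \<longleftrightarrow>
     (\<forall>a \<in> carrier_vec (dim_row aH). \<forall>b \<in> carrier_vec (dim_row aH). \<forall>c \<in> carrier_vec (dim_row aH).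
        hmul mH (aH *\<^sub>v a) (hmul mH b c) = hmul mH (hmul mH a b) (aH *\<^sub>v c)) \<and>
     aH *\<^sub>v hone etaH = hone etaH \<and>
     (\<forall>a \<in> carrier_vec (dim_row aH).
        hmul mH (hone etaH) a = aH *\<^sub>v a \<and> hmul mH a (hone etaH) = aH *\<^sub>v a)"

definition Hobj :: "'a::field_char_0 mat \<Rightarrow> 'a mat \<Rightarrow> 'a mat" where
  "Hobj aH X = kron X aH"

definition Hmor :: "'a::field_char_0 mat \<Rightarrow> 'a mat \<Rightarrow> 'a mat" where
  "Hmor aH f = kron f (1\<^sub>m (dim_row aH))"

text \<open>H2(X,Y) : (X(x)H)(x)(Y(x)H) -> (X(x)Y)(x)H,
  (x(x)a)(x)(y(x)b) |-> (x(x)y)(x) alpha_H^i(a) alpha_H^j(b).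
  Column index ((p*d+s)*(m*d) + q*d + t) corresponds to (e_p(x)e_s)(x)(e_q(x)e_t),
  row index ((p*m+q)*d + u) to (e_p(x)e_q)(x)e_u.\<close>
definition H2 :: "int \<Rightarrow> int \<Rightarrow> 'a::field_char_0 mat \<Rightarrow> 'a mat \<Rightarrow> 'a mat \<Rightarrow> 'a mat \<Rightarrow> 'a mat" where
  "H2 i j aH mH X Y =
    (let d = dim_row aH; n = dim_row X; m = dim_row Y in
     mat ((n * m) * d) ((n * d) * (m * d))
       (\<lambda>(r, c).
          let p = r div d div m; q = r div d mod m; u = r mod d;
              c1 = c div (m * d); c2 = c mod (m * d);
              p' = c1 div d; s = c1 mod d; q' = c2 div d; t = c2 mod d
          in if p = p' \<and> q = q'
             then (hmul mH (mpow_int aH i *\<^sub>v unit_vec d s) (mpow_int aH j *\<^sub>v unit_vec d t)) $ u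
             else 0))"

definition H0 :: "'a::field_char_0 mat \<Rightarrow> 'a mat" where
  "H0 etaH = kron (1\<^sub>m 1) etaH"

definition monoidal_functor_Hdd :: "int \<Rightarrow> int \<Rightarrow> 'a::field_char_0 mat \<Rightarrow> 'a mat \<Rightarrow> 'a mat \<Rightarrow> bool" where
  "monoidal_functor_Hdd i j aH mH etaH \<longleftrightarrow>
     \<comment> \<open>H2(X,Y) and H0 are morphisms of the category\<close>
     (\<forall>X Y. is_obj X \<longrightarrow> is_obj Y \<longrightarrow>
        is_mor (kron (Hobj aH X) (Hobj aH Y)) (Hobj aH (kron X Y)) (H2 i j aH mH X Y)) \<and>
     is_mor unit_obj (Hobj aH unit_obj) (H0 etaH) \<and>
     \<comment> \<open>naturality of H2\<close>
     (\<forall>X X' Y Y' f g. is_obj X \<longrightarrow> is_obj X' \<longrightarrow> is_obj Y \<longrightarrow> is_obj Y' \<longrightarrow>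
        is_mor X X' f \<longrightarrow> is_mor Y Y' g \<longrightarrow>
        H2 i j aH mH X' Y' * kron (Hmor aH f) (Hmor aH g) = Hmor aH (kron f g) * H2 i j aH mH X Y) \<and>
     \<comment> \<open>associativity (hexagon) axiom\<close>
     (\<forall>X Y Z. is_obj X \<longrightarrow> is_obj Y \<longrightarrow> is_obj Z \<longrightarrow>
        H2 i j aH mH X (kron Y Z) * kron (1\<^sub>m (dim_row (Hobj aH X))) (H2 i j aH mH Y Z)
          * assoc_mat i j (Hobj aH X) (Hobj aH Y) (Hobj aH Z)
        = Hmor aH (assoc_mat i j X Y Z) * H2 i j aH mH (kron X Y) Z
          * kron (H2 i j aH mH X Y) (1\<^sub>m (dim_row (Hobj aH Z)))) \<and>
     \<comment> \<open>unit axioms\<close>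
     (\<forall>X. is_obj X \<longrightarrow>
        Hmor aH (runit_mat i X) * H2 i j aH mH X unit_obj
          * kron (1\<^sub>m (dim_row (Hobj aH X))) (H0 etaH) * inv_mat (runit_mat i (Hobj aH X))
          = 1\<^sub>m (dim_row (Hobj aH X)) \<and>
        Hmor aH (lunit_mat j X) * H2 i j aH mH unit_obj X
          * kron (H0 etaH) (1\<^sub>m (dim_row (Hobj aH X))) * inv_mat (lunit_mat j (Hobj aH X))
          = 1\<^sub>m (dim_row (Hobj aH X)))"

end

theory Submission
  imports Defs
begin

lemma sum_split_prod:
  "(\<Sum>c\<in>{0..<n*m}. f c) = (\<Sum>p\<in>{0..<n}. \<Sum>q\<in>{0..<m}. f (p*m+q::nat))"
proof (induction n)
  case 0 then show ?case by simp
next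
  case (Suc n)
  have "{0..<Suc n * m} = {0..<n*m} \<union> {n*m..<n*m+m}" by auto
  then have "(\<Sum>c\<in>{0..<Suc n*m}. f c) = (\<Sum>c\<in>{0..<n*m}. f c) + (\<Sum>c\<in>{n*m..<n*m+m}. f c)"
    by (simp add: sum.union_disjoint ivl_disj_int)
  also have "(\<Sum>c\<in>{n*m..<n*m+m}. f c) = (\<Sum>q\<in>{0..<m}. f (n*m+q))"
    using sum.shift_bounds_nat_ivl[of f "0" "n*m" m] by (simp add: add.commute)
  finally show ?case using Suc by simp
qed

lemma divmod_lt: "p < n \<Longrightarrow> q < (m::nat) \<Longrightarrow> (p*m+q) div m = p \<and> (p*m+q) mod m = q"
  by auto

lemma pm_lt: "p < n \<Longrightarrow> q < (m::nat) \<Longrightarrow> p*m+q < n*m"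
proof -
  assume a: "p < n" "q < m"
  then have "p*m + q < p*m + m" by simp
  also have "\<dots> = Suc p * m" by simp
  also have "\<dots> \<le> n*m" using a by (intro mult_le_mono1) simp
  finally show ?thesis .
qed

lemma div_lt_mult: "k < n*m \<Longrightarrow> k div m < (n::nat)"
  by (simp add: less_mult_imp_div_less)

lemma mod_lt_mult: "k < n*m \<Longrightarrow> k mod m < (m::nat)"
  by (cases "m = 0") auto

lemma dim_vkron[simp]: "dim_vec (vkron x y) = dim_vec x * dim_vec y"
  by (simp add: vkron_def)

lemma vkron_carrier[simp]: "x \<in> carrier_vec n \<Longrightarrow> y \<in> carrier_vec m \<Longrightarrow> vkron x y \<in> carrier_vec (n*m)"
  by (intro carrier_vecI) (simp add: carrier_vecD)

lemma index_vkron: "k < dim_vec x * dim_vec y \<Longrightarrow> vkron x y $ k = x $ (k div dim_vec y) * y $ (k mod dim_vec y)"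
  by (simp add: vkron_def)

lemma dim_kron[simp]: "dim_row (kron A B) = dim_row A * dim_row B" "dim_col (kron A B) = dim_col A * dim_col B"
  by (simp_all add: kron_def)

lemma kron_carrier[simp]: "A \<in> carrier_mat n1 m1 \<Longrightarrow> B \<in> carrier_mat n2 m2 \<Longrightarrow> kron A B \<in> carrier_mat (n1*n2) (m1*m2)"
  by (intro carrier_matI) (simp_all add: carrier_matD)

lemma index_kron: "r < dim_row A * dim_row B \<Longrightarrow> c < dim_col A * dim_col B \<Longrightarrow>
  kron A B $$ (r,c) = A $$ (r div dim_row B, c div dim_col B) * B $$ (r mod dim_row B, c mod dim_col B)"
  by (simp add: kron_def)


lemma vkron_unit: "p < n \<Longrightarrow> q < m \<Longrightarrow> vkron (unit_vec n p) (unit_vec m q) = (unit_vec (n*m) (p*m+q) :: 'a::semiring_1 vec)"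
proof (rule eq_vecI)
  fix k assume p: "p < n" "q < m" and k: "k < dim_vec (unit_vec (n*m) (p*m+q) :: 'a vec)"
  then have k': "k < n*m" by simp
  have "(k = p*m+q) = (k div m = p \<and> k mod m = q)"
    using p by (metis div_mult_mod_eq divmod_lt mult.commute)
  then show "vkron (unit_vec n p) (unit_vec m q) $ k = (unit_vec (n*m) (p*m+q) :: 'a vec) $ k"
    using k' p by (auto simp: index_vkron unit_vec_def div_lt_mult mod_lt_mult)
qed simp

lemma unit_split: "k < n*m \<Longrightarrow> (unit_vec (n*m) k :: 'a::semiring_1 vec) = vkron (unit_vec n (k div m)) (unit_vec m (k mod m))"
  by (subst vkron_unit) (auto simp: div_lt_mult mod_lt_mult)

lemma vkron_assoc: "vkron (vkron x y) z = vkron x (vkron y z)"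
proof (rule eq_vecI)
  fix k assume k: "k < dim_vec (vkron x (vkron y z))"
  let ?m = "dim_vec y" and ?l = "dim_vec z"
  have k': "k < dim_vec x * (?m * ?l)" using k by simp
  have "k div ?l < dim_vec x * ?m" using k' by (simp add: div_lt_mult mult.assoc)
  moreover have "k div ?l div ?m = k div (?m * ?l)" by (metis div_mult2_eq mult.commute)
  moreover have "k div ?l mod ?m = k mod (?m*?l) div ?l"
  proof -
    have "k mod (?l*?m) = ?l * (k div ?l mod ?m) + k mod ?l" by (rule mod_mult2_eq)
    then have "k mod (?m*?l) div ?l = (?l * (k div ?l mod ?m) + k mod ?l) div ?l" by (simp add: mult.commute)
    also have "\<dots> = k div ?l mod ?m" by (cases "?l = 0") auto
    finally show ?thesis by simp
  qed
  moreover have "k mod (?m*?l) mod ?l = k mod ?l" by (simp add: mod_mod_cancel)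
  moreover have "k mod (?m * ?l) < ?m * ?l" using k' by (metis mod_lt_mult mult.commute)
  ultimately show "vkron (vkron x y) z $ k = vkron x (vkron y z) $ k"
    using k' by (simp add: index_vkron mult.assoc mult.commute[of "?l" "?m"])
qed (simp add: mult.assoc)

lemma vkron_e0_left: "vkron (unit_vec 1 0) h = (h :: 'a::semiring_1 vec)"
  by (rule eq_vecI) (auto simp: index_vkron)

lemma vkron_e0_right: "vkron h (unit_vec 1 0) = (h :: 'a::semiring_1 vec)"
  by (rule eq_vecI) (auto simp: index_vkron)


lemma kron_mult_vec:
  fixes A :: "'a::comm_semiring_1 mat"
  assumes A: "A \<in> carrier_mat n1 m1" and B: "B \<in> carrier_mat n2 m2"
    and x: "x \<in> carrier_vec m1" and y: "y \<in> carrier_vec m2"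
  shows "kron A B *\<^sub>v vkron x y = vkron (A *\<^sub>v x) (B *\<^sub>v y)"
proof (rule eq_vecI)
  fix r assume "r < dim_vec (vkron (A *\<^sub>v x) (B *\<^sub>v y))"
  then have r: "r < n1 * n2" using A B by simp
  have "(kron A B *\<^sub>v vkron x y) $ r = (\<Sum>c\<in>{0..<m1*m2}. kron A B $$ (r,c) * vkron x y $ c)"
    using r A B x y by (simp add: scalar_prod_def)
  also have "\<dots> = (\<Sum>p\<in>{0..<m1}. \<Sum>q\<in>{0..<m2}. kron A B $$ (r,p*m2+q) * vkron x y $ (p*m2+q))"
    by (rule sum_split_prod)
  also have "\<dots> = (\<Sum>p\<in>{0..<m1}. \<Sum>q\<in>{0..<m2}. (A $$ (r div n2, p) * x $ p) * (B $$ (r mod n2, q) * y $ q))"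
    by (intro sum.cong refl) (use r A B x y in \<open>auto simp: index_kron index_vkron pm_lt mult_ac\<close>)
  also have "\<dots> = (\<Sum>p\<in>{0..<m1}. A $$ (r div n2, p) * x $ p) * (\<Sum>q\<in>{0..<m2}. B $$ (r mod n2, q) * y $ q)"
    by (simp add: sum_product)
  also have "\<dots> = vkron (A *\<^sub>v x) (B *\<^sub>v y) $ r"
    using r A B x y by (simp add: index_vkron scalar_prod_def div_lt_mult mod_lt_mult row_def)
  finally show "(kron A B *\<^sub>v vkron x y) $ r = vkron (A *\<^sub>v x) (B *\<^sub>v y) $ r" .
qed (use A B in simp)

lemma mat_eq_unitI:
  fixes A :: "'a::comm_semiring_1 mat"
  assumes A: "A \<in> carrier_mat r c" and B: "B \<in> carrier_mat r c"
    and eq: "\<And>k. k < c \<Longrightarrow> A *\<^sub>v unit_vec c k = B *\<^sub>v unit_vec c k"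
  shows "A = B"
proof (rule mat_col_eqI)
  fix k assume "k < dim_col B"
  then have k: "k < c" using B by simp
  have "col A k = A *\<^sub>v unit_vec c k"
    by (rule eq_vecI) (use A k in \<open>auto simp: col_def scalar_prod_right_unit[OF k]\<close>)
  also have "\<dots> = B *\<^sub>v unit_vec c k" by (rule eq[OF k])
  also have "\<dots> = col B k"
    by (rule eq_vecI) (use B k in \<open>auto simp: col_def scalar_prod_right_unit[OF k]\<close>)
  finally show "col A k = col B k" .
qed (use A B in auto)


lemma kron_mult:
  fixes A :: "'a::comm_semiring_1 mat"
  assumes A: "A \<in> carrier_mat n1 k1" and C: "C \<in> carrier_mat k1 m1"
    and B: "B \<in> carrier_mat n2 k2" and D: "D \<in> carrier_mat k2 m2"
  shows "kron A B * kron C D = kron (A * C) (B * D)"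
proof (rule mat_eq_unitI[of _ "n1*n2" "m1*m2"])
  fix k assume k: "k < m1*m2"
  let ?x = "unit_vec m1 (k div m2) :: 'a vec" and ?y = "unit_vec m2 (k mod m2) :: 'a vec"
  have x: "?x \<in> carrier_vec m1" and y: "?y \<in> carrier_vec m2" by auto
  have "kron A B * kron C D *\<^sub>v vkron ?x ?y = kron A B *\<^sub>v (kron C D *\<^sub>v vkron ?x ?y)"
    by (rule assoc_mult_mat_vec[of _ "n1*n2" "k1*k2" _ "m1*m2"]) (use A B C D in auto)
  also have "\<dots> = kron A B *\<^sub>v vkron (C *\<^sub>v ?x) (D *\<^sub>v ?y)"
    by (subst kron_mult_vec[OF C D x y]) simp
  also have "\<dots> = vkron (A *\<^sub>v (C *\<^sub>v ?x)) (B *\<^sub>v (D *\<^sub>v ?y))"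
    by (rule kron_mult_vec[OF A B]) (use C D in auto)
  also have "\<dots> = vkron ((A * C) *\<^sub>v ?x) ((B * D) *\<^sub>v ?y)"
    using A B C D x y by simp
  also have "\<dots> = kron (A * C) (B * D) *\<^sub>v vkron ?x ?y"
    by (rule kron_mult_vec[symmetric]) (use A B C D in auto)
  finally show "kron A B * kron C D *\<^sub>v unit_vec (m1 * m2) k = kron (A * C) (B * D) *\<^sub>v unit_vec (m1 * m2) k"
    unfolding unit_split[OF k] .
qed (use A B C D in auto)

lemma kron_one: "kron (1\<^sub>m n) (1\<^sub>m m) = (1\<^sub>m (n*m) :: 'a::comm_semiring_1 mat)"
proof (rule mat_eq_unitI[of _ "n*m" "n*m"])
  fix k assume k: "k < n*m"
  show "kron (1\<^sub>m n) (1\<^sub>m m) *\<^sub>v unit_vec (n * m) k = (1\<^sub>m (n*m) :: 'a mat) *\<^sub>v unit_vec (n * m) k"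
    unfolding unit_split[OF k] by (subst kron_mult_vec[of "1\<^sub>m n" n n "1\<^sub>m m" m m]) auto
qed auto

lemma kron_one_left: "kron (1\<^sub>m 1) A = (A :: 'a::comm_semiring_1 mat)"
  by (rule eq_matI) (auto simp: index_kron)

lemma kron_one_right: "kron A (1\<^sub>m 1) = (A :: 'a::comm_semiring_1 mat)"
  by (rule eq_matI) (auto simp: index_kron)

lemma inv_mat_props:
  fixes A :: "'a::comm_semiring_1 mat"
  assumes A: "A \<in> carrier_mat n n" and inv: "invertible_mat A"
  shows "inv_mat A \<in> carrier_mat n n \<and> A * inv_mat A = 1\<^sub>m n \<and> inv_mat A * A = 1\<^sub>m n"
proof -
  obtain B where B: "inverts_mat A B" "inverts_mat B A" using inv unfolding invertible_mat_def by blast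
  have "B \<in> carrier_mat n n"
  proof -
    have "dim_col (A * B) = dim_col (1\<^sub>m (dim_row A) :: 'a mat)" using B(1) unfolding inverts_mat_def by simp
    moreover have "dim_row (B * A) = dim_row B" by simp
    moreover have "dim_col (B * A) = dim_col (1\<^sub>m (dim_row B) :: 'a mat)" using B(2) unfolding inverts_mat_def by simp
    ultimately show ?thesis using A by (intro carrier_matI) auto
  qed
  then have "\<exists>B. B \<in> carrier_mat (dim_row A) (dim_row A) \<and> inverts_mat A B \<and> inverts_mat B A"
    using A B by auto
  from someI_ex[OF this] have "inv_mat A \<in> carrier_mat n n \<and> inverts_mat A (inv_mat A) \<and> inverts_mat (inv_mat A) A"
    unfolding inv_mat_def using A by auto
  then show ?thesis using A unfolding inverts_mat_def by auto
qed

lemma inv_mat_eq: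
  fixes A :: "'a::comm_semiring_1 mat"
  assumes A: "A \<in> carrier_mat n n" and B: "B \<in> carrier_mat n n"
    and AB: "A * B = 1\<^sub>m n" and BA: "B * A = 1\<^sub>m n"
  shows "invertible_mat A \<and> inv_mat A = B"
proof -
  have inv: "invertible_mat A" unfolding invertible_mat_def inverts_mat_def
    using A B AB BA by (auto simp: square_mat.simps intro!: exI[of _ B])
  from inv_mat_props[OF A inv] have P: "inv_mat A \<in> carrier_mat n n" "inv_mat A * A = 1\<^sub>m n" by auto
  have "inv_mat A = inv_mat A * (A * B)" using P AB by simp
  also have "\<dots> = (inv_mat A * A) * B" using P A B by (intro assoc_mult_mat[symmetric]) auto
  also have "\<dots> = B" by (subst P(2)) (use B in simp)
  finally show ?thesis using inv by simp
qed


lemma pow_add_mat: "A \<in> carrier_mat n n \<Longrightarrow> A ^\<^sub>m (a + b) = A ^\<^sub>m a * A ^\<^sub>m b"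
proof (induction b)
  case 0 then show ?case by simp
next
  case (Suc b)
  then have "A ^\<^sub>m (a + Suc b) = A ^\<^sub>m a * A ^\<^sub>m b * A" by simp
  also have "\<dots> = A ^\<^sub>m a * (A ^\<^sub>m b * A)" using Suc.prems by (intro assoc_mult_mat) auto
  finally show ?case by simp
qed

lemma pow_Suc_left: "A \<in> carrier_mat n n \<Longrightarrow> A ^\<^sub>m (Suc k) = A * A ^\<^sub>m k"
  using pow_add_mat[of A n 1 k] by simp

lemma pow_one_mat: "(1\<^sub>m n :: 'a::semiring_1 mat) ^\<^sub>m k = 1\<^sub>m n"
  by (induction k) auto

definition mp :: "'a::semiring_1 mat \<Rightarrow> 'a mat \<Rightarrow> int \<Rightarrow> 'a mat" where
  "mp A B k = (if 0 \<le> k then A ^\<^sub>m nat k else B ^\<^sub>m nat (- k))"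

lemma mp_carrier: "A \<in> carrier_mat n n \<Longrightarrow> B \<in> carrier_mat n n \<Longrightarrow> mp A B k \<in> carrier_mat n n"
  by (simp add: mp_def)

lemma pow_cancel:
  assumes A: "A \<in> carrier_mat n n" and B: "B \<in> carrier_mat n n"
    and AB: "A * B = 1\<^sub>m n"
  shows "A ^\<^sub>m a * B ^\<^sub>m b = mp A B (int a - int b)"
proof (induction a arbitrary: b)
  case 0
  then show ?case using A B by (cases b) (auto simp: mp_def nat_add_distrib)
next
  case (Suc a)
  show ?case
  proof (cases b)
    case 0
    have "nat (1 + int a) = Suc a" by simp
    then show ?thesis using 0 A B by (simp add: mp_def)
  next
    case (Suc b')
    have "A ^\<^sub>m (Suc a) * B ^\<^sub>m b = (A ^\<^sub>m a * A) * (B * B ^\<^sub>m b')"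
      using Suc B pow_Suc_left[OF B, of b'] by simp
    also have "\<dots> = A ^\<^sub>m a * ((A * B) * B ^\<^sub>m b')"
      using A B by (simp add: assoc_mult_mat[of _ n n _ n _ n] mult_carrier_mat[of _ n n _ n])
    also have "\<dots> = A ^\<^sub>m a * B ^\<^sub>m b'" using AB B by simp
    also have "\<dots> = mp A B (int a - int b')" by (rule Suc.IH)
    finally show ?thesis using Suc by simp
  qed
qed

lemma mp_swap: "A \<in> carrier_mat n n \<Longrightarrow> B \<in> carrier_mat n n \<Longrightarrow> mp B A (- k) = mp A B k"
  by (auto simp: mp_def)

lemma mp_split: "A \<in> carrier_mat n n \<Longrightarrow> B \<in> carrier_mat n n \<Longrightarrow> mp A B k = A ^\<^sub>m (nat k) * B ^\<^sub>m (nat (- k))"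
  by (auto simp: mp_def)

lemma mp_add:
  assumes A: "A \<in> carrier_mat n n" and B: "B \<in> carrier_mat n n"
    and AB: "A * B = 1\<^sub>m n" and BA: "B * A = 1\<^sub>m n"
  shows "mp A B (k + l) = mp A B k * mp A B l"
proof -
  define a1 where "a1 = nat k" define b1 where "b1 = nat (-k)"
  define a2 where "a2 = nat l" define b2 where "b2 = nat (-l)"
  have comm: "B ^\<^sub>m b1 * A ^\<^sub>m a2 = A ^\<^sub>m a2 * B ^\<^sub>m b1"
    using pow_cancel[OF B A BA, of b1 a2] pow_cancel[OF A B AB, of a2 b1] mp_swap[OF B A]
    by (metis minus_diff_eq)
  have "mp A B k * mp A B l = (A ^\<^sub>m a1 * B ^\<^sub>m b1) * (A ^\<^sub>m a2 * B ^\<^sub>m b2)"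
    using A B by (simp add: mp_split a1_def b1_def a2_def b2_def)
  also have "\<dots> = A ^\<^sub>m a1 * ((B ^\<^sub>m b1 * A ^\<^sub>m a2) * B ^\<^sub>m b2)"
    using A B by (simp add: assoc_mult_mat[of _ n n _ n _ n] mult_carrier_mat[of _ n n _ n])
  also have "\<dots> = A ^\<^sub>m a1 * ((A ^\<^sub>m a2 * B ^\<^sub>m b1) * B ^\<^sub>m b2)" by (simp add: comm)
  also have "\<dots> = (A ^\<^sub>m a1 * A ^\<^sub>m a2) * (B ^\<^sub>m b1 * B ^\<^sub>m b2)"
    using A B by (simp add: assoc_mult_mat[of _ n n _ n _ n] mult_carrier_mat[of _ n n _ n])
  also have "\<dots> = A ^\<^sub>m (a1 + a2) * B ^\<^sub>m (b1 + b2)"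
    using A B by (simp add: pow_add_mat)
  also have "\<dots> = mp A B (int (a1 + a2) - int (b1 + b2))" by (rule pow_cancel[OF A B AB])
  also have "int (a1 + a2) - int (b1 + b2) = k + l" unfolding a1_def a2_def b1_def b2_def by simp
  finally show ?thesis ..
qed


locale inv_ctx =
  fixes A :: "'a::comm_semiring_1 mat" and n :: nat
  assumes A: "A \<in> carrier_mat n n" and invA: "invertible_mat A"
begin

lemma Ai: "inv_mat A \<in> carrier_mat n n" "A * inv_mat A = 1\<^sub>m n" "inv_mat A * A = 1\<^sub>m n"
  using inv_mat_props[OF A invA] by auto

lemma mpow_mp: "mpow_int A k = mp A (inv_mat A) k"
  by (simp add: mpow_int_def mp_def)

lemma mpow_carrier[simp]: "mpow_int A k \<in> carrier_mat n n"
  unfolding mpow_mp by (rule mp_carrier[OF A Ai(1)])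

lemma mpow_add: "mpow_int A (k + l) = mpow_int A k * mpow_int A l"
  unfolding mpow_mp by (rule mp_add[OF A Ai(1) Ai(2) Ai(3)])

lemma mpow_0: "mpow_int A 0 = 1\<^sub>m n"
  using A by (simp add: mpow_int_def)

lemma mpow_1: "mpow_int A 1 = A"
  using A by (simp add: mpow_int_def)

lemma mpow_inv: "invertible_mat (mpow_int A k) \<and> inv_mat (mpow_int A k) = mpow_int A (- k)"
  by (rule inv_mat_eq[of _ n]) (auto simp: mpow_add[symmetric] mpow_0)

lemma mpow_vec: "v \<in> carrier_vec n \<Longrightarrow> mpow_int A k *\<^sub>v (mpow_int A l *\<^sub>v v) = mpow_int A (k + l) *\<^sub>v v"
  by (simp add: mpow_add assoc_mult_mat_vec[of _ n n _ n])

lemma mpow_0_vec: "v \<in> carrier_vec n \<Longrightarrow> mpow_int A 0 *\<^sub>v v = v"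
  by (simp add: mpow_0)

end

lemma kron_pow:
  fixes X :: "'a::comm_semiring_1 mat"
  assumes X: "X \<in> carrier_mat n n" and Y: "Y \<in> carrier_mat m m"
  shows "kron X Y ^\<^sub>m a = kron (X ^\<^sub>m a) (Y ^\<^sub>m a)"
proof (induction a)
  case 0 then show ?case using X Y by (simp add: kron_one)
next
  case (Suc a) then show ?case using X Y by (simp add: kron_mult[of _ n n _ n _ m m _ m])
qed

lemma mpow_kron:
  fixes X :: "'a::comm_semiring_1 mat"
  assumes X: "X \<in> carrier_mat n n" "invertible_mat X" and Y: "Y \<in> carrier_mat m m" "invertible_mat Y"
  shows "mpow_int (kron X Y) k = kron (mpow_int X k) (mpow_int Y k)"
proof -
  interpret x: inv_ctx X n using X by unfold_locales
  interpret y: inv_ctx Y m using Y by unfold_locales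
  have "invertible_mat (kron X Y) \<and> inv_mat (kron X Y) = kron (inv_mat X) (inv_mat Y)"
    by (rule inv_mat_eq[of _ "n*m"]) (use X Y x.Ai y.Ai in \<open>auto simp: kron_mult[of _ n n _ n _ m m _ m] kron_one\<close>)
  then show ?thesis
    using X Y x.Ai y.Ai by (auto simp: mpow_int_def kron_pow)
qed

lemma mpow_one_mat: "mpow_int (1\<^sub>m n :: 'a::comm_semiring_1 mat) k = 1\<^sub>m n"
proof -
  have "invertible_mat (1\<^sub>m n :: 'a mat) \<and> inv_mat (1\<^sub>m n :: 'a mat) = 1\<^sub>m n"
    by (rule inv_mat_eq[of _ n]) auto
  then show ?thesis by (simp add: mpow_int_def pow_one_mat)
qed


lemma bilin_index:
  fixes N :: "'a::comm_semiring_1 mat"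
  assumes N: "N \<in> carrier_mat r (k*l)" and a: "a \<in> carrier_vec k" and b: "b \<in> carrier_vec l" and u: "u < r"
  shows "(N *\<^sub>v vkron a b) $ u = (\<Sum>s\<in>{0..<k}. \<Sum>t\<in>{0..<l}. N $$ (u, s*l+t) * a $ s * b $ t)"
proof -
  have "(N *\<^sub>v vkron a b) $ u = (\<Sum>c\<in>{0..<k*l}. N $$ (u,c) * vkron a b $ c)"
    using N a b u by (simp add: scalar_prod_def)
  also have "\<dots> = (\<Sum>s\<in>{0..<k}. \<Sum>t\<in>{0..<l}. N $$ (u, s*l+t) * vkron a b $ (s*l+t))"
    by (rule sum_split_prod)
  also have "\<dots> = (\<Sum>s\<in>{0..<k}. \<Sum>t\<in>{0..<l}. N $$ (u, s*l+t) * a $ s * b $ t)"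
    by (intro sum.cong refl) (use a b in \<open>auto simp: index_vkron pm_lt mult_ac\<close>)
  finally show ?thesis .
qed

lemma quad_swap:
  fixes N :: "nat \<Rightarrow> nat \<Rightarrow> 'a::comm_semiring_1"
  shows "(\<Sum>s\<in>S. \<Sum>t\<in>T. (\<Sum>s'\<in>S'. \<Sum>t'\<in>T'. N s' t' * P s' s * Q t' t) * a s * b t)
    = (\<Sum>s'\<in>S'. \<Sum>t'\<in>T'. N s' t' * (\<Sum>s\<in>S. P s' s * a s) * (\<Sum>t\<in>T. Q t' t * b t))"
proof -
  let ?f = "\<lambda>s t s' t'. N s' t' * P s' s * Q t' t * a s * b t"
  have "(\<Sum>s\<in>S. \<Sum>t\<in>T. (\<Sum>s'\<in>S'. \<Sum>t'\<in>T'. N s' t' * P s' s * Q t' t) * a s * b t)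
      = (\<Sum>s\<in>S. \<Sum>t\<in>T. \<Sum>s'\<in>S'. \<Sum>t'\<in>T'. ?f s t s' t')"
    by (simp add: sum_distrib_right)
  also have "\<dots> = (\<Sum>s\<in>S. \<Sum>s'\<in>S'. \<Sum>t\<in>T. \<Sum>t'\<in>T'. ?f s t s' t')"
    by (rule sum.cong[OF refl], rule sum.swap)
  also have "\<dots> = (\<Sum>s'\<in>S'. \<Sum>s\<in>S. \<Sum>t\<in>T. \<Sum>t'\<in>T'. ?f s t s' t')"
    by (rule sum.swap)
  also have "\<dots> = (\<Sum>s'\<in>S'. \<Sum>s\<in>S. \<Sum>t'\<in>T'. \<Sum>t\<in>T. ?f s t s' t')"
    by (intro sum.cong refl sum.swap)
  also have "\<dots> = (\<Sum>s'\<in>S'. \<Sum>t'\<in>T'. \<Sum>s\<in>S. \<Sum>t\<in>T. ?f s t s' t')"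
    by (rule sum.cong[OF refl], rule sum.swap)
  also have "\<dots> = (\<Sum>s'\<in>S'. \<Sum>t'\<in>T'. N s' t' * (\<Sum>s\<in>S. P s' s * a s) * (\<Sum>t\<in>T. Q t' t * b t))"
    by (simp add: sum_distrib_left sum_distrib_right mult_ac)
  finally show ?thesis .
qed

lemma delta_sum4:
  fixes f :: "nat \<Rightarrow> nat \<Rightarrow> nat \<Rightarrow> nat \<Rightarrow> 'a::comm_semiring_1"
  assumes p: "p < n" and q: "q < m"
  shows "(\<Sum>p'\<in>{0..<n}. \<Sum>s\<in>{0..<d}. \<Sum>q'\<in>{0..<m}. \<Sum>t\<in>{0..<d}.
      (if p = p' \<and> q = q' then M s t else 0) * f p' s q' t)
    = (\<Sum>s\<in>{0..<d}. \<Sum>t\<in>{0..<d}. M s t * f p s q t)"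
proof -
  have "(\<Sum>p'\<in>{0..<n}. \<Sum>s\<in>{0..<d}. \<Sum>q'\<in>{0..<m}. \<Sum>t\<in>{0..<d}.
      (if p = p' \<and> q = q' then M s t else 0) * f p' s q' t)
    = (\<Sum>p'\<in>{0..<n}. if p' = p then (\<Sum>s\<in>{0..<d}. \<Sum>q'\<in>{0..<m}. if q' = q then (\<Sum>t\<in>{0..<d}. M s t * f p s q t) else 0) else 0)"
  proof (rule sum.cong[OF refl])
    fix p' assume "p' \<in> {0..<n}"
    show "(\<Sum>s\<in>{0..<d}. \<Sum>q'\<in>{0..<m}. \<Sum>t\<in>{0..<d}. (if p = p' \<and> q = q' then M s t else 0) * f p' s q' t)
      = (if p' = p then (\<Sum>s\<in>{0..<d}. \<Sum>q'\<in>{0..<m}. if q' = q then (\<Sum>t\<in>{0..<d}. M s t * f p s q t) else 0) else 0)"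
    proof (cases "p' = p")
      case True
      have h: "(\<Sum>t\<in>{0..<d}. (if p = p' \<and> q = q' then M s t else 0) * f p' s q' t) = (if q' = q then (\<Sum>t\<in>{0..<d}. M s t * f p s q t) else 0)" for s q'
        by (cases "q' = q") (auto simp: True)
      show ?thesis by (simp only: h) (simp add: True)
    qed auto
  qed
  also have "\<dots> = (\<Sum>s\<in>{0..<d}. \<Sum>t\<in>{0..<d}. M s t * f p s q t)"
    using p q by (simp add: sum.delta)
  finally show ?thesis .
qed


lemma H2_carrier:
  "H2 i j aH mH X Y \<in> carrier_mat ((dim_row X * dim_row Y) * dim_row aH) ((dim_row X * dim_row aH) * (dim_row Y * dim_row aH))"
  by (simp add: H2_def Let_def)

lemma H2_index:
  assumes d: "d = dim_row aH" and n: "n = dim_row X" and m: "m = dim_row Y"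
    and p: "p < n" and q: "q < m" and u: "u < d"
    and p': "p' < n" and s: "s < d" and q': "q' < m" and t: "t < d"
  shows "H2 i j aH mH X Y $$ ((p*m+q)*d+u, (p'*d+s)*(m*d) + (q'*d+t)) =
    (if p = p' \<and> q = q' then (hmul mH (mpow_int aH i *\<^sub>v unit_vec d s) (mpow_int aH j *\<^sub>v unit_vec d t)) $ u else 0)"
proof -
  have r: "(p*m+q)*d+u < (n*m)*d" using p q u by (intro pm_lt pm_lt)
  have c1: "p'*d+s < n*d" using p' s by (rule pm_lt)
  have c2: "q'*d+t < m*d" using q' t by (rule pm_lt)
  have c: "(p'*d+s)*(m*d) + (q'*d+t) < (n*d)*(m*d)" using c1 c2 by (rule pm_lt)
  have e1: "((p*m+q)*d+u) div d div m = p" "((p*m+q)*d+u) div d mod m = q" "((p*m+q)*d+u) mod d = u"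
    using divmod_lt[OF p q] divmod_lt[OF pm_lt[OF p q] u] by auto
  have e2: "((p'*d+s)*(m*d) + (q'*d+t)) div (m*d) = p'*d+s" "((p'*d+s)*(m*d) + (q'*d+t)) mod (m*d) = q'*d+t"
    using divmod_lt[OF c1 c2] by auto
  show ?thesis
    using r c e1 e2 divmod_lt[OF p' s] divmod_lt[OF q' t] unfolding H2_def Let_def d[symmetric] n[symmetric] m[symmetric]
    by simp
qed

lemma H2_act:
  fixes aH :: "'a::field_char_0 mat"
  assumes d: "d = dim_row aH" and n: "n = dim_row X" and m: "m = dim_row Y"
    and Ai: "mpow_int aH i \<in> carrier_mat d d" and Aj: "mpow_int aH j \<in> carrier_mat d d"
    and mH: "mH \<in> carrier_mat d (d*d)"
    and x: "x \<in> carrier_vec n" and a: "a \<in> carrier_vec d" and y: "y \<in> carrier_vec m" and b: "b \<in> carrier_vec d"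
  shows "H2 i j aH mH X Y *\<^sub>v vkron (vkron x a) (vkron y b)
    = vkron (vkron x y) (hmul mH (mpow_int aH i *\<^sub>v a) (mpow_int aH j *\<^sub>v b))"
proof (rule eq_vecI)
  let ?H = "H2 i j aH mH X Y"
  let ?v = "vkron (vkron x a) (vkron y b)"
  let ?Ai = "mpow_int aH i" and ?Aj = "mpow_int aH j"
  let ?M = "\<lambda>u s t. (hmul mH (?Ai *\<^sub>v unit_vec d s) (?Aj *\<^sub>v unit_vec d t)) $ u"
  have Hc: "?H \<in> carrier_mat ((n*m)*d) ((n*d)*(m*d))" using H2_carrier d n m by metis
  fix r assume "r < dim_vec (vkron (vkron x y) (hmul mH (?Ai *\<^sub>v a) (?Aj *\<^sub>v b)))"
  then have r: "r < (n*m)*d" using x y mH by (simp add: hmul_def)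
  define p where "p = r div d div m" define q where "q = r div d mod m" define u where "u = r mod d"
  have rdec: "r = (p*m+q)*d+u" unfolding p_def q_def u_def by simp
  have p: "p < n" unfolding p_def using r by (metis div_lt_mult mult.commute mult.assoc)
  have q: "q < m" unfolding q_def using r by (metis div_lt_mult mod_lt_mult)
  have u: "u < d" unfolding u_def using r by (metis mod_lt_mult)
  have "(?H *\<^sub>v ?v) $ r = (\<Sum>c\<in>{0..<(n*d)*(m*d)}. ?H $$ (r,c) * ?v $ c)"
    using Hc r x y a b by (simp add: scalar_prod_def)
  also have "\<dots> = (\<Sum>c1\<in>{0..<n*d}. \<Sum>c2\<in>{0..<m*d}. ?H $$ (r,c1*(m*d)+c2) * ?v $ (c1*(m*d)+c2))"
    by (rule sum_split_prod)
  also have "\<dots> = (\<Sum>p'\<in>{0..<n}. \<Sum>s\<in>{0..<d}. \<Sum>c2\<in>{0..<m*d}. ?H $$ (r,(p'*d+s)*(m*d)+c2) * ?v $ ((p'*d+s)*(m*d)+c2))"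
    by (rule sum_split_prod)
  also have "\<dots> = (\<Sum>p'\<in>{0..<n}. \<Sum>s\<in>{0..<d}. \<Sum>q'\<in>{0..<m}. \<Sum>t\<in>{0..<d}. ?H $$ (r,(p'*d+s)*(m*d)+(q'*d+t)) * ?v $ ((p'*d+s)*(m*d)+(q'*d+t)))"
    by (intro sum.cong refl sum_split_prod)
  also have "\<dots> = (\<Sum>p'\<in>{0..<n}. \<Sum>s\<in>{0..<d}. \<Sum>q'\<in>{0..<m}. \<Sum>t\<in>{0..<d}.
      (if p = p' \<and> q = q' then ?M u s t else 0) * ((x $ p' * a $ s) * (y $ q' * b $ t)))"
  proof (intro sum.cong refl)
    fix p' s q' t assume "p' \<in> {0..<n}" "s \<in> {0..<d}" "q' \<in> {0..<m}" "t \<in> {0..<d}"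
    then have p': "p' < n" and s: "s < d" and q': "q' < m" and t: "t < d" by auto
    have c1: "p'*d+s < n*d" using p' s by (rule pm_lt)
    have c2: "q'*d+t < m*d" using q' t by (rule pm_lt)
    have "?v $ ((p'*d+s)*(m*d)+(q'*d+t)) = (x $ p' * a $ s) * (y $ q' * b $ t)"
      using x y a b divmod_lt[OF c1 c2] divmod_lt[OF p' s] divmod_lt[OF q' t] pm_lt[OF c1 c2] c1 c2
      by (simp add: index_vkron)
    then show "?H $$ (r,(p'*d+s)*(m*d)+(q'*d+t)) * ?v $ ((p'*d+s)*(m*d)+(q'*d+t)) =
      (if p = p' \<and> q = q' then ?M u s t else 0) * ((x $ p' * a $ s) * (y $ q' * b $ t))"
      unfolding rdec using H2_index[OF d n m p q u p' s q' t] by simp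
  qed
  also have "\<dots> = (\<Sum>s\<in>{0..<d}. \<Sum>t\<in>{0..<d}. ?M u s t * ((x $ p * a $ s) * (y $ q * b $ t)))"
    by (rule delta_sum4[OF p q])
  also have "\<dots> = x $ p * y $ q * (\<Sum>s\<in>{0..<d}. \<Sum>t\<in>{0..<d}. ?M u s t * a $ s * b $ t)"
    by (simp add: sum_distrib_left mult_ac)
  also have "(\<Sum>s\<in>{0..<d}. \<Sum>t\<in>{0..<d}. ?M u s t * a $ s * b $ t)
      = (\<Sum>s\<in>{0..<d}. \<Sum>t\<in>{0..<d}. (\<Sum>s'\<in>{0..<d}. \<Sum>t'\<in>{0..<d}. mH $$ (u, s'*d+t') * ?Ai $$ (s',s) * ?Aj $$ (t',t)) * a $ s * b $ t)"
  proof (intro sum.cong refl)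
    fix s t assume "s \<in> {0..<d}" "t \<in> {0..<d}"
    then have s: "s < d" and t: "t < d" by auto
    have "?M u s t = (\<Sum>s'\<in>{0..<d}. \<Sum>t'\<in>{0..<d}. mH $$ (u, s'*d+t') * (?Ai *\<^sub>v unit_vec d s) $ s' * (?Aj *\<^sub>v unit_vec d t) $ t')"
      unfolding hmul_def by (rule bilin_index[OF mH _ _ u]) (use Ai Aj in auto)
    also have "\<dots> = (\<Sum>s'\<in>{0..<d}. \<Sum>t'\<in>{0..<d}. mH $$ (u, s'*d+t') * ?Ai $$ (s',s) * ?Aj $$ (t',t))"
      by (intro sum.cong refl) (use Ai Aj s t in \<open>auto simp: scalar_prod_right_unit\<close>)
    finally show "?M u s t * a $ s * b $ t = (\<Sum>s'\<in>{0..<d}. \<Sum>t'\<in>{0..<d}. mH $$ (u, s'*d+t') * ?Ai $$ (s',s) * ?Aj $$ (t',t)) * a $ s * b $ t"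
      by simp
  qed
  also have "\<dots> = (\<Sum>s'\<in>{0..<d}. \<Sum>t'\<in>{0..<d}. mH $$ (u, s'*d+t') * (\<Sum>s\<in>{0..<d}. ?Ai $$ (s',s) * a $ s) * (\<Sum>t\<in>{0..<d}. ?Aj $$ (t',t) * b $ t))"
    by (rule quad_swap)
  also have "\<dots> = (\<Sum>s'\<in>{0..<d}. \<Sum>t'\<in>{0..<d}. mH $$ (u, s'*d+t') * (?Ai *\<^sub>v a) $ s' * (?Aj *\<^sub>v b) $ t')"
    by (intro sum.cong refl) (use Ai Aj a b in \<open>auto simp: scalar_prod_def row_def\<close>)
  also have "\<dots> = hmul mH (?Ai *\<^sub>v a) (?Aj *\<^sub>v b) $ u"
    unfolding hmul_def by (rule bilin_index[OF mH _ _ u, symmetric]) (use Ai Aj a b in auto)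
  also have "x $ p * y $ q * hmul mH (?Ai *\<^sub>v a) (?Aj *\<^sub>v b) $ u = vkron (vkron x y) (hmul mH (?Ai *\<^sub>v a) (?Aj *\<^sub>v b)) $ r"
    using r x y mH u p q unfolding p_def q_def u_def
    by (simp add: index_vkron hmul_def div_lt_mult mult.assoc)
  finally show "(?H *\<^sub>v ?v) $ r = vkron (vkron x y) (hmul mH (?Ai *\<^sub>v a) (?Aj *\<^sub>v b)) $ r" .
qed (use x y mH H2_carrier[of i j aH mH X Y] d n m in \<open>simp add: hmul_def\<close>)


lemma hmul_carrier: "mH \<in> carrier_mat d (d*d) \<Longrightarrow> hmul mH u v \<in> carrier_vec d"
  unfolding hmul_def by (intro carrier_vecI) simp

lemma pow_hom_vec:
  fixes P :: "'a::field_char_0 mat"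
  assumes P: "P \<in> carrier_mat d d" and mH: "mH \<in> carrier_mat d (d*d)"
    and hom: "\<And>u v. u \<in> carrier_vec d \<Longrightarrow> v \<in> carrier_vec d \<Longrightarrow> P *\<^sub>v hmul mH u v = hmul mH (P *\<^sub>v u) (P *\<^sub>v v)"
    and u: "u \<in> carrier_vec d" and v: "v \<in> carrier_vec d"
  shows "P ^\<^sub>m a *\<^sub>v hmul mH u v = hmul mH (P ^\<^sub>m a *\<^sub>v u) (P ^\<^sub>m a *\<^sub>v v)"
proof -
  have "\<forall>u\<in>carrier_vec d. \<forall>v\<in>carrier_vec d. P ^\<^sub>m a *\<^sub>v hmul mH u v = hmul mH (P ^\<^sub>m a *\<^sub>v u) (P ^\<^sub>m a *\<^sub>v v)"
  proof (induction a)
    case 0 then show ?case using P mH hmul_carrier[OF mH] by simp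
  next
    case (Suc a)
    show ?case
    proof (intro ballI)
      fix u v :: "'a vec" assume u: "u \<in> carrier_vec d" and v: "v \<in> carrier_vec d"
      have "P ^\<^sub>m Suc a *\<^sub>v hmul mH u v = P ^\<^sub>m a *\<^sub>v (P *\<^sub>v hmul mH u v)"
        using P mH u v hmul_carrier[OF mH] by (simp add: assoc_mult_mat_vec[of _ d d _ d])
      also have "\<dots> = P ^\<^sub>m a *\<^sub>v hmul mH (P *\<^sub>v u) (P *\<^sub>v v)" using hom u v by simp
      also have "\<dots> = hmul mH (P ^\<^sub>m a *\<^sub>v (P *\<^sub>v u)) (P ^\<^sub>m a *\<^sub>v (P *\<^sub>v v))"
        using Suc.IH P u v by simp
      finally show "P ^\<^sub>m Suc a *\<^sub>v hmul mH u v = hmul mH (P ^\<^sub>m Suc a *\<^sub>v u) (P ^\<^sub>m Suc a *\<^sub>v v)"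
        using P u v by (simp add: assoc_mult_mat_vec[of _ d d _ d])
    qed
  qed
  then show ?thesis using u v by blast
qed

lemma pow_fix_vec:
  fixes P :: "'a::field_char_0 mat"
  assumes P: "P \<in> carrier_mat d d" and h: "h \<in> carrier_vec d" and fx: "P *\<^sub>v h = h"
  shows "P ^\<^sub>m a *\<^sub>v h = h"
proof (induction a)
  case 0 then show ?case using P h by simp
next
  case (Suc a) then show ?case using P h fx by (simp add: assoc_mult_mat_vec[of _ d d _ d])
qed


lemma mat_eq_unit2:
  fixes A :: "'a::comm_semiring_1 mat"
  assumes A: "A \<in> carrier_mat r (n*m)" and B: "B \<in> carrier_mat r (n*m)"
    and eq: "\<And>p q. p < n \<Longrightarrow> q < m \<Longrightarrow> A *\<^sub>v vkron (unit_vec n p) (unit_vec m q) = B *\<^sub>v vkron (unit_vec n p) (unit_vec m q)"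
  shows "A = B"
proof (rule mat_eq_unitI[OF A B])
  fix k assume k: "k < n*m"
  show "A *\<^sub>v unit_vec (n*m) k = B *\<^sub>v unit_vec (n*m) k"
    unfolding unit_split[OF k] by (rule eq) (use k in \<open>auto simp: div_lt_mult mod_lt_mult\<close>)
qed

lemma mat_eq_t2:
  fixes A :: "'a::comm_semiring_1 mat"
  assumes A: "A \<in> carrier_mat r (n*m)" and B: "B \<in> carrier_mat r (n*m)"
    and eq: "\<And>x y. x \<in> carrier_vec n \<Longrightarrow> y \<in> carrier_vec m \<Longrightarrow> A *\<^sub>v vkron x y = B *\<^sub>v vkron x y"
  shows "A = B"
  by (rule mat_eq_unit2[OF A B]) (rule eq; simp)

lemma mat_eq_t4:
  fixes A :: "'a::comm_semiring_1 mat"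
  assumes A: "A \<in> carrier_mat r ((n*d)*(m*e))" and B: "B \<in> carrier_mat r ((n*d)*(m*e))"
    and eq: "\<And>x a y b. x \<in> carrier_vec n \<Longrightarrow> a \<in> carrier_vec d \<Longrightarrow> y \<in> carrier_vec m \<Longrightarrow> b \<in> carrier_vec e \<Longrightarrow>
      A *\<^sub>v vkron (vkron x a) (vkron y b) = B *\<^sub>v vkron (vkron x a) (vkron y b)"
  shows "A = B"
proof (rule mat_eq_unit2[OF A B])
  fix p q assume p: "p < n*d" and q: "q < m*e"
  show "A *\<^sub>v vkron (unit_vec (n*d) p) (unit_vec (m*e) q) = B *\<^sub>v vkron (unit_vec (n*d) p) (unit_vec (m*e) q)"
    unfolding unit_split[OF p] unit_split[OF q] by (rule eq) auto
qed

lemma mat_eq_t6: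
  fixes A :: "'a::comm_semiring_1 mat"
  assumes A: "A \<in> carrier_mat r (((n1*d1)*(n2*d2))*(n3*d3))" and B: "B \<in> carrier_mat r (((n1*d1)*(n2*d2))*(n3*d3))"
    and eq: "\<And>x a y b z c. x \<in> carrier_vec n1 \<Longrightarrow> a \<in> carrier_vec d1 \<Longrightarrow> y \<in> carrier_vec n2 \<Longrightarrow> b \<in> carrier_vec d2 \<Longrightarrow>
      z \<in> carrier_vec n3 \<Longrightarrow> c \<in> carrier_vec d3 \<Longrightarrow>
      A *\<^sub>v vkron (vkron (vkron x a) (vkron y b)) (vkron z c) = B *\<^sub>v vkron (vkron (vkron x a) (vkron y b)) (vkron z c)"
  shows "A = B"
proof (rule mat_eq_unit2[OF A B])
  fix p q assume p: "p < (n1*d1)*(n2*d2)" and q: "q < n3*d3"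
  have p1: "p div (n2*d2) < n1*d1" and p2: "p mod (n2*d2) < n2*d2" using p by (auto simp: div_lt_mult mod_lt_mult)
  show "A *\<^sub>v vkron (unit_vec ((n1*d1)*(n2*d2)) p) (unit_vec (n3*d3) q) = B *\<^sub>v vkron (unit_vec ((n1*d1)*(n2*d2)) p) (unit_vec (n3*d3) q)"
    unfolding unit_split[OF p] unit_split[OF q] unit_split[OF p1] unit_split[OF p2] by (rule eq) auto
qed

lemma kron_invertible:
  fixes X :: "'a::comm_semiring_1 mat"
  assumes X: "X \<in> carrier_mat n n" "invertible_mat X" and Y: "Y \<in> carrier_mat m m" "invertible_mat Y"
  shows "invertible_mat (kron X Y)"
proof -
  interpret x: inv_ctx X n using X by unfold_locales
  interpret y: inv_ctx Y m using Y by unfold_locales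
  have "invertible_mat (kron X Y) \<and> inv_mat (kron X Y) = kron (inv_mat X) (inv_mat Y)"
    by (rule inv_mat_eq[of _ "n*m"]) (use X Y x.Ai y.Ai in \<open>auto simp: kron_mult[of _ n n _ n _ m m _ m] kron_one\<close>)
  then show ?thesis by simp
qed

lemma e0_vec: "vec 1 (\<lambda>_. 1) = (unit_vec 1 0 :: 'a::semiring_1 vec)"
  by (rule eq_vecI) auto

locale hctx =
  fixes aH mH etaH :: "'a::field_char_0 mat" and d :: nat
  assumes d: "d = dim_row aH" and obj: "is_obj aH" and mor_m: "is_mor (kron aH aH) aH mH"
    and mor_e: "is_mor unit_obj aH etaH"
begin

lemma aH: "aH \<in> carrier_mat d d" "invertible_mat aH"
  using obj d unfolding is_obj_def by auto

sublocale inv_ctx aH d using aH by unfold_locales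

lemma mH: "mH \<in> carrier_mat d (d*d)" "mH * kron aH aH = aH * mH"
proof -
  have "mH \<in> carrier_mat (dim_row aH) (dim_row (kron aH aH))" "mH * kron aH aH = aH * mH"
    using mor_m unfolding is_mor_def by blast+
  then show "mH \<in> carrier_mat d (d*d)" "mH * kron aH aH = aH * mH" using d by simp_all
qed

lemma etaH: "etaH \<in> carrier_mat d 1" "aH * etaH = etaH"
proof -
  have c: "etaH \<in> carrier_mat (dim_row aH) 1" and e: "etaH * 1\<^sub>m 1 = aH * etaH"
    using mor_e unfolding is_mor_def unit_obj_def by auto
  show "etaH \<in> carrier_mat d 1" using c d by simp
  show "aH * etaH = etaH" using e c by simp
qed

abbreviation al :: "int \<Rightarrow> 'a mat" where "al k \<equiv> mpow_int aH k"

lemma hm_c[simp]: "hmul mH u v \<in> carrier_vec d" by (rule hmul_carrier[OF mH(1)])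

lemma al_c[simp]: "al k \<in> carrier_mat d d" by simp

lemma al_v_c[simp]: "v \<in> carrier_vec d \<Longrightarrow> al k *\<^sub>v v \<in> carrier_vec d" by (rule mult_mat_vec_carrier[OF al_c])

lemma hone_c[simp]: "hone etaH \<in> carrier_vec d"
  unfolding hone_def using etaH(1) by (intro mult_mat_vec_carrier) auto

lemma aH_hom: "u \<in> carrier_vec d \<Longrightarrow> v \<in> carrier_vec d \<Longrightarrow> aH *\<^sub>v hmul mH u v = hmul mH (aH *\<^sub>v u) (aH *\<^sub>v v)"
proof -
  assume u: "u \<in> carrier_vec d" and v: "v \<in> carrier_vec d"
  have "aH *\<^sub>v hmul mH u v = (aH * mH) *\<^sub>v vkron u v" unfolding hmul_def
    using aH mH u v by (intro assoc_mult_mat_vec[symmetric]) auto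
  also have "\<dots> = (mH * kron aH aH) *\<^sub>v vkron u v" using mH by simp
  also have "\<dots> = mH *\<^sub>v (kron aH aH *\<^sub>v vkron u v)"
    using aH mH u v by (intro assoc_mult_mat_vec) auto
  also have "\<dots> = hmul mH (aH *\<^sub>v u) (aH *\<^sub>v v)" unfolding hmul_def
    using kron_mult_vec[OF aH(1) aH(1) u v] by simp
  finally show ?thesis .
qed

lemma B_hom: "u \<in> carrier_vec d \<Longrightarrow> v \<in> carrier_vec d \<Longrightarrow> inv_mat aH *\<^sub>v hmul mH u v = hmul mH (inv_mat aH *\<^sub>v u) (inv_mat aH *\<^sub>v v)"
proof -
  assume u: "u \<in> carrier_vec d" and v: "v \<in> carrier_vec d"
  let ?B = "inv_mat aH"
  have bu: "?B *\<^sub>v u \<in> carrier_vec d" "?B *\<^sub>v v \<in> carrier_vec d" using Ai u v by auto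
  have "u = aH *\<^sub>v (?B *\<^sub>v u)" "v = aH *\<^sub>v (?B *\<^sub>v v)"
    using Ai aH u v by (simp_all add: assoc_mult_mat_vec[symmetric, of _ d d _ d])
  then have "hmul mH u v = aH *\<^sub>v hmul mH (?B *\<^sub>v u) (?B *\<^sub>v v)"
    using aH_hom[OF bu] by simp
  then have "?B *\<^sub>v hmul mH u v = ?B *\<^sub>v (aH *\<^sub>v hmul mH (?B *\<^sub>v u) (?B *\<^sub>v v))" by simp
  also have "\<dots> = (?B * aH) *\<^sub>v hmul mH (?B *\<^sub>v u) (?B *\<^sub>v v)"
    by (rule assoc_mult_mat_vec[symmetric]) (use Ai aH in auto)
  also have "\<dots> = hmul mH (?B *\<^sub>v u) (?B *\<^sub>v v)" using Ai by simp
  finally show ?thesis .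
qed

lemma al_hom: "u \<in> carrier_vec d \<Longrightarrow> v \<in> carrier_vec d \<Longrightarrow> al k *\<^sub>v hmul mH u v = hmul mH (al k *\<^sub>v u) (al k *\<^sub>v v)"
  unfolding mpow_int_def
  using pow_hom_vec[OF aH(1) mH(1) aH_hom] pow_hom_vec[OF Ai(1) mH(1) B_hom] by simp

lemma aH_hone: "aH *\<^sub>v hone etaH = hone etaH"
  unfolding hone_def using aH etaH by (simp add: assoc_mult_mat_vec[symmetric, of _ d d _ 1])

lemma B_hone: "inv_mat aH *\<^sub>v hone etaH = hone etaH"
proof -
  have "inv_mat aH *\<^sub>v hone etaH = inv_mat aH *\<^sub>v (aH *\<^sub>v hone etaH)" using aH_hone by simp
  also have "\<dots> = hone etaH" using Ai aH by (simp add: assoc_mult_mat_vec[symmetric, of _ d d _ d])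
  finally show ?thesis .
qed

lemma al_hone: "al k *\<^sub>v hone etaH = hone etaH"
  unfolding mpow_int_def using pow_fix_vec[OF aH(1) hone_c aH_hone] pow_fix_vec[OF Ai(1) hone_c B_hone] by simp

lemma al_al: "v \<in> carrier_vec d \<Longrightarrow> al k *\<^sub>v (al l *\<^sub>v v) = al (k + l) *\<^sub>v v"
  by (rule mpow_vec)


lemma obj_c: "is_obj X \<Longrightarrow> X \<in> carrier_mat (dim_row X) (dim_row X)" unfolding is_obj_def by blast
lemma obj_i: "is_obj X \<Longrightarrow> invertible_mat X" unfolding is_obj_def by blast

lemma aH_al: "aH = al 1" by (simp add: mpow_1)

lemma al_aH_comm: "v \<in> carrier_vec d \<Longrightarrow> al k *\<^sub>v (aH *\<^sub>v v) = aH *\<^sub>v (al k *\<^sub>v v)"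
proof -
  assume v: "v \<in> carrier_vec d"
  have "al k *\<^sub>v (al 1 *\<^sub>v v) = al 1 *\<^sub>v (al k *\<^sub>v v)" using v by (simp add: al_al add.commute)
  then show ?thesis by (simp add: aH_al[symmetric])
qed

lemma H2_act': "x \<in> carrier_vec (dim_row X) \<Longrightarrow> a \<in> carrier_vec d \<Longrightarrow> y \<in> carrier_vec (dim_row Y) \<Longrightarrow> b \<in> carrier_vec d \<Longrightarrow>
  H2 i j aH mH X Y *\<^sub>v vkron (vkron x a) (vkron y b) = vkron (vkron x y) (hmul mH (al i *\<^sub>v a) (al j *\<^sub>v b))"
  by (rule H2_act[OF d refl refl al_c al_c mH(1)])

lemma H2_c: "H2 i j aH mH X Y \<in> carrier_mat ((dim_row X * dim_row Y) * d) ((dim_row X * d) * (dim_row Y * d))"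
  using H2_carrier[of i j aH mH X Y] d by simp

lemma kron1_act: "(f :: 'a mat) \<in> carrier_mat n' n \<Longrightarrow> x \<in> carrier_vec n \<Longrightarrow> h \<in> carrier_vec d \<Longrightarrow>
  kron f (1\<^sub>m d) *\<^sub>v vkron x h = vkron (f *\<^sub>v x) h"
  by (subst kron_mult_vec[of f n' n "1\<^sub>m d" d d]) auto

lemma comp_morph:
  assumes X: "is_obj X" and Y: "is_obj Y"
  shows "is_mor (kron (Hobj aH X) (Hobj aH Y)) (Hobj aH (kron X Y)) (H2 i j aH mH X Y)"
proof -
  let ?n = "dim_row X" and ?m = "dim_row Y"
  have Xc: "X \<in> carrier_mat ?n ?n" and Yc: "Y \<in> carrier_mat ?m ?m" using obj_c X Y by auto
  let ?K = "kron (kron X aH) (kron Y aH)" and ?H = "H2 i j aH mH X Y"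
  have Kc: "?K \<in> carrier_mat ((?n*d)*(?m*d)) ((?n*d)*(?m*d))"
    using kron_carrier[OF kron_carrier[OF Xc aH(1)] kron_carrier[OF Yc aH(1)]] .
  have Hc: "?H \<in> carrier_mat ((?n*?m)*d) ((?n*d)*(?m*d))" by (rule H2_c)
  have Rc: "kron (kron X Y) aH \<in> carrier_mat ((?n*?m)*d) ((?n*?m)*d)"
    using kron_carrier[OF kron_carrier[OF Xc Yc] aH(1)] .
  have "?H * ?K = kron (kron X Y) aH * ?H"
  proof (rule mat_eq_t4[of _ "(?n*?m)*d" ?n d ?m d])
    show "?H * ?K \<in> carrier_mat ((?n*?m)*d) ((?n*d)*(?m*d))" using Hc Kc by simp
    show "kron (kron X Y) aH * ?H \<in> carrier_mat ((?n*?m)*d) ((?n*d)*(?m*d))" using Hc Rc by simp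
    fix x a y b :: "'a vec" assume x: "x \<in> carrier_vec ?n" and a: "a \<in> carrier_vec d" and y: "y \<in> carrier_vec ?m" and b: "b \<in> carrier_vec d"
    have xa: "vkron x a \<in> carrier_vec (?n*d)" and yb: "vkron y b \<in> carrier_vec (?m*d)" using x a y b by auto
    have "(?H * ?K) *\<^sub>v vkron (vkron x a) (vkron y b) = ?H *\<^sub>v (?K *\<^sub>v vkron (vkron x a) (vkron y b))"
      by (rule assoc_mult_mat_vec[OF Hc Kc]) (use xa yb in simp)
    also have "?K *\<^sub>v vkron (vkron x a) (vkron y b) = vkron (vkron (X *\<^sub>v x) (aH *\<^sub>v a)) (vkron (Y *\<^sub>v y) (aH *\<^sub>v b))"
      using kron_mult_vec[OF kron_carrier[OF Xc aH(1)] kron_carrier[OF Yc aH(1)] xa yb]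
        kron_mult_vec[OF Xc aH(1) x a] kron_mult_vec[OF Yc aH(1) y b] by simp
    also have "?H *\<^sub>v \<dots> = vkron (vkron (X *\<^sub>v x) (Y *\<^sub>v y)) (hmul mH (al i *\<^sub>v (aH *\<^sub>v a)) (al j *\<^sub>v (aH *\<^sub>v b)))"
      by (rule H2_act'[OF mult_mat_vec_carrier[OF Xc x] mult_mat_vec_carrier[OF aH(1) a] mult_mat_vec_carrier[OF Yc y] mult_mat_vec_carrier[OF aH(1) b]])
    also have "\<dots> = vkron (kron X Y *\<^sub>v vkron x y) (aH *\<^sub>v hmul mH (al i *\<^sub>v a) (al j *\<^sub>v b))"
      by (simp only: kron_mult_vec[OF Xc Yc x y] aH_hom[OF al_v_c[OF a] al_v_c[OF b]] al_aH_comm[OF a] al_aH_comm[OF b])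
    also have "\<dots> = kron (kron X Y) aH *\<^sub>v vkron (vkron x y) (hmul mH (al i *\<^sub>v a) (al j *\<^sub>v b))"
      by (rule kron_mult_vec[OF kron_carrier[OF Xc Yc] aH(1) vkron_carrier[OF x y] hm_c, symmetric])
    also have "\<dots> = kron (kron X Y) aH *\<^sub>v (?H *\<^sub>v vkron (vkron x a) (vkron y b))"
      using H2_act'[OF _ a _ b, of x X y Y] x y by simp
    also have "\<dots> = (kron (kron X Y) aH * ?H) *\<^sub>v vkron (vkron x a) (vkron y b)"
      by (rule assoc_mult_mat_vec[OF Rc Hc, symmetric]) (use xa yb in simp)
    finally show "(?H * ?K) *\<^sub>v vkron (vkron x a) (vkron y b) = (kron (kron X Y) aH * ?H) *\<^sub>v vkron (vkron x a) (vkron y b)" .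
  qed
  then show ?thesis unfolding is_mor_def Hobj_def using Hc d by simp
qed


lemma comp_nat:
  assumes X: "is_obj X" and X': "is_obj X'" and Y: "is_obj Y" and Y': "is_obj Y'"
    and f: "is_mor X X' f" and g: "is_mor Y Y' g"
  shows "H2 i j aH mH X' Y' * kron (Hmor aH f) (Hmor aH g) = Hmor aH (kron f g) * H2 i j aH mH X Y"
proof -
  let ?n = "dim_row X" and ?m = "dim_row Y" and ?n' = "dim_row X'" and ?m' = "dim_row Y'"
  have fc: "f \<in> carrier_mat ?n' ?n" and gc: "g \<in> carrier_mat ?m' ?m" using f g unfolding is_mor_def by auto
  have Hm: "Hmor aH f = kron f (1\<^sub>m d)" "Hmor aH g = kron g (1\<^sub>m d)" "Hmor aH (kron f g) = kron (kron f g) (1\<^sub>m d)"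
    unfolding Hmor_def d by auto
  let ?K = "kron (kron f (1\<^sub>m d)) (kron g (1\<^sub>m d))" and ?L = "kron (kron f g) (1\<^sub>m d)"
  let ?H' = "H2 i j aH mH X' Y'" and ?H = "H2 i j aH mH X Y"
  have Kc: "?K \<in> carrier_mat ((?n'*d)*(?m'*d)) ((?n*d)*(?m*d))"
    using kron_carrier[OF kron_carrier[OF fc one_carrier_mat] kron_carrier[OF gc one_carrier_mat]] .
  have Lc: "?L \<in> carrier_mat ((?n'*?m')*d) ((?n*?m)*d)"
    using kron_carrier[OF kron_carrier[OF fc gc] one_carrier_mat] .
  have H'c: "?H' \<in> carrier_mat ((?n'*?m')*d) ((?n'*d)*(?m'*d))" by (rule H2_c)
  have Hc: "?H \<in> carrier_mat ((?n*?m)*d) ((?n*d)*(?m*d))" by (rule H2_c)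
  have "?H' * ?K = ?L * ?H"
  proof (rule mat_eq_t4[of _ "(?n'*?m')*d" ?n d ?m d])
    show "?H' * ?K \<in> carrier_mat ((?n'*?m')*d) ((?n*d)*(?m*d))" using mult_carrier_mat[OF H'c Kc] .
    show "?L * ?H \<in> carrier_mat ((?n'*?m')*d) ((?n*d)*(?m*d))" using mult_carrier_mat[OF Lc Hc] .
    fix x a y b :: "'a vec" assume x: "x \<in> carrier_vec ?n" and a: "a \<in> carrier_vec d" and y: "y \<in> carrier_vec ?m" and b: "b \<in> carrier_vec d"
    have xa: "vkron x a \<in> carrier_vec (?n*d)" and yb: "vkron y b \<in> carrier_vec (?m*d)" using x a y b by auto
    have v: "vkron (vkron x a) (vkron y b) \<in> carrier_vec ((?n*d)*(?m*d))" using vkron_carrier[OF xa yb] .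
    have "(?H' * ?K) *\<^sub>v vkron (vkron x a) (vkron y b) = ?H' *\<^sub>v (?K *\<^sub>v vkron (vkron x a) (vkron y b))"
      by (rule assoc_mult_mat_vec[OF H'c Kc v])
    also have "?K *\<^sub>v vkron (vkron x a) (vkron y b) = vkron (vkron (f *\<^sub>v x) a) (vkron (g *\<^sub>v y) b)"
      by (simp only: kron_mult_vec[OF kron_carrier[OF fc one_carrier_mat] kron_carrier[OF gc one_carrier_mat] xa yb]
        kron1_act[OF fc x a] kron1_act[OF gc y b])
    also have "?H' *\<^sub>v \<dots> = vkron (vkron (f *\<^sub>v x) (g *\<^sub>v y)) (hmul mH (al i *\<^sub>v a) (al j *\<^sub>v b))"
      by (rule H2_act'[OF mult_mat_vec_carrier[OF fc x] a mult_mat_vec_carrier[OF gc y] b])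
    also have "\<dots> = ?L *\<^sub>v vkron (vkron x y) (hmul mH (al i *\<^sub>v a) (al j *\<^sub>v b))"
      by (simp only: kron1_act[OF kron_carrier[OF fc gc] vkron_carrier[OF x y] hm_c] kron_mult_vec[OF fc gc x y])
    also have "\<dots> = ?L *\<^sub>v (?H *\<^sub>v vkron (vkron x a) (vkron y b))"
      by (simp only: H2_act'[OF x a y b])
    also have "\<dots> = (?L * ?H) *\<^sub>v vkron (vkron x a) (vkron y b)"
      by (rule assoc_mult_mat_vec[OF Lc Hc v, symmetric])
    finally show "(?H' * ?K) *\<^sub>v vkron (vkron x a) (vkron y b) = (?L * ?H) *\<^sub>v vkron (vkron x a) (vkron y b)" .
  qed
  then show ?thesis unfolding Hm .
qed


lemma obj_mpow_c: "is_obj X \<Longrightarrow> mpow_int X k \<in> carrier_mat (dim_row X) (dim_row X)"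
  using inv_ctx.mpow_carrier[of X "dim_row X"] obj_c obj_i unfolding inv_ctx_def by blast

lemma Hobj_mpow: "is_obj X \<Longrightarrow> mpow_int (Hobj aH X) k = kron (mpow_int X k) (al k)"
  unfolding Hobj_def by (rule mpow_kron[OF obj_c obj_i aH]) auto

lemma hex_L:
  assumes X: "is_obj X" and Y: "is_obj Y" and Z: "is_obj Z"
    and x: "x \<in> carrier_vec (dim_row X)" and y: "y \<in> carrier_vec (dim_row Y)" and z: "z \<in> carrier_vec (dim_row Z)"
    and a: "a \<in> carrier_vec d" and b: "b \<in> carrier_vec d" and c: "c \<in> carrier_vec d"
  shows "(H2 i j aH mH X (kron Y Z) * kron (1\<^sub>m (dim_row (Hobj aH X))) (H2 i j aH mH Y Z)
          * assoc_mat i j (Hobj aH X) (Hobj aH Y) (Hobj aH Z)) *\<^sub>v vkron (vkron (vkron x a) (vkron y b)) (vkron z c)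
    = vkron (vkron (mpow_int X (i+1) *\<^sub>v x) (vkron y (mpow_int Z (-j-1) *\<^sub>v z)))
        (hmul mH (al i *\<^sub>v (al (i+1) *\<^sub>v a)) (al j *\<^sub>v hmul mH (al i *\<^sub>v b) (al j *\<^sub>v (al (-j-1) *\<^sub>v c))))"
proof -
  let ?n = "dim_row X" and ?m = "dim_row Y" and ?l = "dim_row Z"
  let ?X1 = "mpow_int X (i+1)" and ?Z1 = "mpow_int Z (-j-1)"
  have X1: "?X1 \<in> carrier_mat ?n ?n" and Z1: "?Z1 \<in> carrier_mat ?l ?l" using obj_mpow_c X Z by auto
  have Yc: "Y \<in> carrier_mat ?m ?m" and Zc: "Z \<in> carrier_mat ?l ?l" using obj_c Y Z by auto
  let ?AM = "assoc_mat i j (Hobj aH X) (Hobj aH Y) (Hobj aH Z)"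
  have AMeq: "?AM = kron (kron (kron ?X1 (al (i+1))) (1\<^sub>m (?m*d))) (kron ?Z1 (al (-j-1)))"
    unfolding assoc_mat_def Hobj_mpow[OF X] Hobj_mpow[OF Z] by (simp add: Hobj_def d)
  let ?N = "(?n*d)*((?m*d)*(?l*d))"
  have AMc0: "?AM \<in> carrier_mat (((?n*d)*(?m*d))*(?l*d)) (((?n*d)*(?m*d))*(?l*d))"
    unfolding AMeq using kron_carrier[OF kron_carrier[OF kron_carrier[OF X1 al_c] one_carrier_mat] kron_carrier[OF Z1 al_c]] .
  have NN: "((?n*d)*(?m*d))*(?l*d) = ?N" by (simp add: mult.assoc)
  have AMc: "?AM \<in> carrier_mat ?N ?N" using AMc0 unfolding NN .
  let ?K = "kron (1\<^sub>m (dim_row (Hobj aH X))) (H2 i j aH mH Y Z)"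
  have Kc: "?K \<in> carrier_mat ((?n*d)*((?m*?l)*d)) ?N"
    unfolding Hobj_def dim_kron d[symmetric] using kron_carrier[OF one_carrier_mat H2_c] .
  let ?H = "H2 i j aH mH X (kron Y Z)"
  have Hc: "?H \<in> carrier_mat ((?n*(?m*?l))*d) ((?n*d)*((?m*?l)*d))"
    using H2_c[of i j X "kron Y Z"] by simp
  have HKc: "?H * ?K \<in> carrier_mat ((?n*(?m*?l))*d) ?N" using mult_carrier_mat[OF Hc Kc] .
  have xa: "vkron x a \<in> carrier_vec (?n*d)" and yb: "vkron y b \<in> carrier_vec (?m*d)" and zc: "vkron z c \<in> carrier_vec (?l*d)"
    using x a y b z c by auto
  have T: "vkron (vkron (vkron x a) (vkron y b)) (vkron z c) \<in> carrier_vec ?N"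
    using vkron_carrier[OF vkron_carrier[OF xa yb] zc] unfolding NN .
  let ?T = "vkron (vkron (vkron x a) (vkron y b)) (vkron z c)"
  let ?x1 = "?X1 *\<^sub>v x" and ?z1 = "?Z1 *\<^sub>v z" and ?a1 = "al (i+1) *\<^sub>v a" and ?c1 = "al (-j-1) *\<^sub>v c"
  have x1: "?x1 \<in> carrier_vec ?n" and z1: "?z1 \<in> carrier_vec ?l" using X1 Z1 x z by auto
  have a1: "?a1 \<in> carrier_vec d" and c1: "?c1 \<in> carrier_vec d" using a c by auto
  have "(?H * ?K * ?AM) *\<^sub>v ?T = (?H * ?K) *\<^sub>v (?AM *\<^sub>v ?T)"
    by (rule assoc_mult_mat_vec[OF HKc AMc T])
  also have "?AM *\<^sub>v ?T = vkron (vkron (vkron ?x1 ?a1) (vkron y b)) (vkron ?z1 ?c1)"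
    unfolding AMeq
    by (simp only: kron_mult_vec[OF kron_carrier[OF kron_carrier[OF X1 al_c] one_carrier_mat] kron_carrier[OF Z1 al_c] vkron_carrier[OF xa yb] zc]
      kron_mult_vec[OF kron_carrier[OF X1 al_c] one_carrier_mat xa yb] kron_mult_vec[OF X1 al_c x a]
      kron_mult_vec[OF Z1 al_c z c] one_mult_mat_vec[OF yb])
  also have "\<dots> = vkron (vkron ?x1 ?a1) (vkron (vkron y b) (vkron ?z1 ?c1))" by (rule vkron_assoc)
  also have "(?H * ?K) *\<^sub>v \<dots> = ?H *\<^sub>v (?K *\<^sub>v vkron (vkron ?x1 ?a1) (vkron (vkron y b) (vkron ?z1 ?c1)))"
    by (rule assoc_mult_mat_vec[OF Hc Kc]) (use vkron_carrier[OF vkron_carrier[OF x1 a1] vkron_carrier[OF yb vkron_carrier[OF z1 c1]]] in \<open>simp only: mult.assoc\<close>)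
  also have "?K *\<^sub>v vkron (vkron ?x1 ?a1) (vkron (vkron y b) (vkron ?z1 ?c1))
      = vkron (vkron ?x1 ?a1) (vkron (vkron y ?z1) (hmul mH (al i *\<^sub>v b) (al j *\<^sub>v ?c1)))"
    unfolding Hobj_def dim_kron d[symmetric]
    by (simp only: kron_mult_vec[OF one_carrier_mat H2_c vkron_carrier[OF x1 a1] vkron_carrier[OF yb vkron_carrier[OF z1 c1]]]
      one_mult_mat_vec[OF vkron_carrier[OF x1 a1]] H2_act'[OF y b z1 c1])
  also have "?H *\<^sub>v \<dots> = vkron (vkron ?x1 (vkron y ?z1)) (hmul mH (al i *\<^sub>v ?a1) (al j *\<^sub>v hmul mH (al i *\<^sub>v b) (al j *\<^sub>v ?c1)))"
    by (rule H2_act'[OF x1 a1 _ hm_c]) (use vkron_carrier[OF y z1] in simp)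
  finally show ?thesis .
qed


lemma hex_R:
  assumes X: "is_obj X" and Y: "is_obj Y" and Z: "is_obj Z"
    and x: "x \<in> carrier_vec (dim_row X)" and y: "y \<in> carrier_vec (dim_row Y)" and z: "z \<in> carrier_vec (dim_row Z)"
    and a: "a \<in> carrier_vec d" and b: "b \<in> carrier_vec d" and c: "c \<in> carrier_vec d"
  shows "(Hmor aH (assoc_mat i j X Y Z) * H2 i j aH mH (kron X Y) Z
          * kron (H2 i j aH mH X Y) (1\<^sub>m (dim_row (Hobj aH Z)))) *\<^sub>v vkron (vkron (vkron x a) (vkron y b)) (vkron z c)
    = vkron (vkron (mpow_int X (i+1) *\<^sub>v x) (vkron y (mpow_int Z (-j-1) *\<^sub>v z)))
        (hmul mH (al i *\<^sub>v hmul mH (al i *\<^sub>v a) (al j *\<^sub>v b)) (al j *\<^sub>v c))"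
proof -
  let ?n = "dim_row X" and ?m = "dim_row Y" and ?l = "dim_row Z"
  let ?X1 = "mpow_int X (i+1)" and ?Z1 = "mpow_int Z (-j-1)"
  have X1: "?X1 \<in> carrier_mat ?n ?n" and Z1: "?Z1 \<in> carrier_mat ?l ?l" using obj_mpow_c X Z by auto
  let ?R1 = "Hmor aH (assoc_mat i j X Y Z)" and ?R2 = "H2 i j aH mH (kron X Y) Z"
    and ?R3 = "kron (H2 i j aH mH X Y) (1\<^sub>m (dim_row (Hobj aH Z)))"
  have R1eq: "?R1 = kron (kron (kron ?X1 (1\<^sub>m ?m)) ?Z1) (1\<^sub>m d)"
    unfolding Hmor_def assoc_mat_def d by simp
  have R1c: "?R1 \<in> carrier_mat (((?n*?m)*?l)*d) (((?n*?m)*?l)*d)"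
    unfolding R1eq using kron_carrier[OF kron_carrier[OF kron_carrier[OF X1 one_carrier_mat] Z1] one_carrier_mat] .
  have R2c: "?R2 \<in> carrier_mat (((?n*?m)*?l)*d) (((?n*?m)*d)*(?l*d))"
    using H2_c[of i j "kron X Y" Z] by simp
  have R3c: "?R3 \<in> carrier_mat (((?n*?m)*d)*(?l*d)) (((?n*d)*(?m*d))*(?l*d))"
    unfolding Hobj_def dim_kron d[symmetric] using kron_carrier[OF H2_c one_carrier_mat] .
  have R12c: "?R1 * ?R2 \<in> carrier_mat (((?n*?m)*?l)*d) (((?n*?m)*d)*(?l*d))" using mult_carrier_mat[OF R1c R2c] .
  have xa: "vkron x a \<in> carrier_vec (?n*d)" and yb: "vkron y b \<in> carrier_vec (?m*d)" and zc: "vkron z c \<in> carrier_vec (?l*d)"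
    using x a y b z c by auto
  let ?T = "vkron (vkron (vkron x a) (vkron y b)) (vkron z c)"
  have T: "?T \<in> carrier_vec (((?n*d)*(?m*d))*(?l*d))" using vkron_carrier[OF vkron_carrier[OF xa yb] zc] .
  let ?h1 = "hmul mH (al i *\<^sub>v a) (al j *\<^sub>v b)"
  have xy: "vkron x y \<in> carrier_vec (dim_row (kron X Y))" using vkron_carrier[OF x y] by simp
  have "(?R1 * ?R2 * ?R3) *\<^sub>v ?T = (?R1 * ?R2) *\<^sub>v (?R3 *\<^sub>v ?T)"
    by (rule assoc_mult_mat_vec[OF R12c R3c T])
  also have "?R3 *\<^sub>v ?T = vkron (vkron (vkron x y) ?h1) (vkron z c)"
    unfolding Hobj_def dim_kron d[symmetric]
    by (simp only: kron_mult_vec[OF H2_c one_carrier_mat vkron_carrier[OF xa yb] zc] one_mult_mat_vec[OF zc] H2_act'[OF x a y b])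
  also have "(?R1 * ?R2) *\<^sub>v \<dots> = ?R1 *\<^sub>v (?R2 *\<^sub>v vkron (vkron (vkron x y) ?h1) (vkron z c))"
    by (rule assoc_mult_mat_vec[OF R1c R2c]) (use vkron_carrier[OF vkron_carrier[OF vkron_carrier[OF x y] hm_c] zc] in simp)
  also have "?R2 *\<^sub>v vkron (vkron (vkron x y) ?h1) (vkron z c) = vkron (vkron (vkron x y) z) (hmul mH (al i *\<^sub>v ?h1) (al j *\<^sub>v c))"
    by (rule H2_act'[OF xy hm_c z c])
  also have "?R1 *\<^sub>v \<dots> = vkron (vkron (vkron (?X1 *\<^sub>v x) y) (?Z1 *\<^sub>v z)) (hmul mH (al i *\<^sub>v ?h1) (al j *\<^sub>v c))"
    unfolding R1eq
    by (simp only: kron_mult_vec[OF kron_carrier[OF kron_carrier[OF X1 one_carrier_mat] Z1] one_carrier_mat vkron_carrier[OF vkron_carrier[OF x y] z] hm_c]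
      one_mult_mat_vec[OF hm_c] kron_mult_vec[OF kron_carrier[OF X1 one_carrier_mat] Z1 vkron_carrier[OF x y] z]
      kron_mult_vec[OF X1 one_carrier_mat x y] one_mult_mat_vec[OF y])
  also have "\<dots> = vkron (vkron (?X1 *\<^sub>v x) (vkron y (?Z1 *\<^sub>v z))) (hmul mH (al i *\<^sub>v ?h1) (al j *\<^sub>v c))"
    by (simp only: vkron_assoc)
  finally show ?thesis .
qed


lemma H0_eq: "H0 etaH = etaH" unfolding H0_def by (rule kron_one_left)

lemma hone_eta: "etaH *\<^sub>v unit_vec 1 0 = hone etaH" unfolding hone_def e0_vec ..

lemma inv_Hobj_mpow:
  assumes X: "is_obj X"
  shows "inv_mat (mpow_int (Hobj aH X) k) = kron (mpow_int X (-k)) (al (-k))"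
proof -
  have Kc: "Hobj aH X \<in> carrier_mat (dim_row X * d) (dim_row X * d)"
    unfolding Hobj_def using kron_carrier[OF obj_c[OF X] aH(1)] .
  have Ki: "invertible_mat (Hobj aH X)" unfolding Hobj_def by (rule kron_invertible[OF obj_c[OF X] obj_i[OF X] aH])
  interpret K: inv_ctx "Hobj aH X" "dim_row X * d" using Kc Ki by unfold_locales
  show ?thesis using K.mpow_inv[of k] Hobj_mpow[OF X] by simp
qed

lemma runit_act:
  assumes X: "is_obj X" and x: "x \<in> carrier_vec (dim_row X)" and a: "a \<in> carrier_vec d"
  shows "(Hmor aH (runit_mat i X) * H2 i j aH mH X unit_obj * kron (1\<^sub>m (dim_row (Hobj aH X))) (H0 etaH)
      * inv_mat (runit_mat i (Hobj aH X))) *\<^sub>v vkron x a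
    = vkron (mpow_int X (i+1) *\<^sub>v (mpow_int X (-(i+1)) *\<^sub>v x)) (hmul mH (al i *\<^sub>v (al (-(i+1)) *\<^sub>v a)) (al j *\<^sub>v hone etaH))"
proof -
  let ?n = "dim_row X"
  let ?X1 = "mpow_int X (i+1)" and ?X0 = "mpow_int X (-(i+1))"
  have X1: "?X1 \<in> carrier_mat ?n ?n" and X0: "?X0 \<in> carrier_mat ?n ?n" using obj_mpow_c X by auto
  let ?U1 = "Hmor aH (runit_mat i X)" and ?U2 = "H2 i j aH mH X unit_obj"
    and ?U3 = "kron (1\<^sub>m (dim_row (Hobj aH X))) (H0 etaH)" and ?U4 = "inv_mat (runit_mat i (Hobj aH X))"
  have U1: "?U1 = kron ?X1 (1\<^sub>m d)" unfolding Hmor_def runit_mat_def d ..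
  have U3: "?U3 = kron (1\<^sub>m (?n*d)) etaH" unfolding H0_eq Hobj_def dim_kron d ..
  have U4: "?U4 = kron ?X0 (al (-(i+1)))" unfolding runit_mat_def by (rule inv_Hobj_mpow[OF X])
  have un: "dim_row (unit_obj :: 'a mat) = 1" by (simp add: unit_obj_def)
  have U1c: "?U1 \<in> carrier_mat (?n*d) (?n*d)" unfolding U1 using kron_carrier[OF X1 one_carrier_mat] .
  have U2c: "?U2 \<in> carrier_mat (?n*d) ((?n*d)*d)" using H2_c[of i j X unit_obj] unfolding un by simp
  have U3c: "?U3 \<in> carrier_mat ((?n*d)*d) (?n*d)" unfolding U3 using kron_carrier[OF one_carrier_mat etaH(1)] by simp
  have U4c: "?U4 \<in> carrier_mat (?n*d) (?n*d)" unfolding U4 using kron_carrier[OF X0 al_c] .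
  have U12c: "?U1 * ?U2 \<in> carrier_mat (?n*d) ((?n*d)*d)" using mult_carrier_mat[OF U1c U2c] .
  have U123c: "?U1 * ?U2 * ?U3 \<in> carrier_mat (?n*d) (?n*d)" using mult_carrier_mat[OF U12c U3c] .
  have xa: "vkron x a \<in> carrier_vec (?n*d)" using x a by simp
  let ?x0 = "?X0 *\<^sub>v x" and ?a0 = "al (-(i+1)) *\<^sub>v a"
  have x0: "?x0 \<in> carrier_vec ?n" and a0: "?a0 \<in> carrier_vec d" using X0 x a by auto
  have x0a0: "vkron ?x0 ?a0 \<in> carrier_vec (?n*d)" using x0 a0 by simp
  have e0: "unit_vec 1 0 \<in> carrier_vec 1" by simp
  have e0u: "unit_vec 1 0 \<in> carrier_vec (dim_row (unit_obj :: 'a mat))" unfolding un by simp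
  have "(?U1 * ?U2 * ?U3 * ?U4) *\<^sub>v vkron x a = (?U1 * ?U2 * ?U3) *\<^sub>v (?U4 *\<^sub>v vkron x a)"
    by (rule assoc_mult_mat_vec[OF U123c U4c xa])
  also have "?U4 *\<^sub>v vkron x a = vkron ?x0 ?a0" unfolding U4 by (rule kron_mult_vec[OF X0 al_c x a])
  also have "(?U1 * ?U2 * ?U3) *\<^sub>v vkron ?x0 ?a0 = (?U1 * ?U2) *\<^sub>v (?U3 *\<^sub>v vkron ?x0 ?a0)"
    by (rule assoc_mult_mat_vec[OF U12c U3c]) (use x0a0 in simp)
  also have "?U3 *\<^sub>v vkron ?x0 ?a0 = vkron (vkron ?x0 ?a0) (hone etaH)"
  proof -
    have "?U3 *\<^sub>v vkron ?x0 ?a0 = kron (1\<^sub>m (?n*d)) etaH *\<^sub>v vkron (vkron ?x0 ?a0) (unit_vec 1 0)"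
      unfolding U3 vkron_e0_right ..
    also have "\<dots> = vkron (vkron ?x0 ?a0) (hone etaH)"
      by (simp only: kron_mult_vec[OF one_carrier_mat etaH(1) x0a0 e0] one_mult_mat_vec[OF x0a0] hone_eta)
    finally show ?thesis .
  qed
  also have "(?U1 * ?U2) *\<^sub>v vkron (vkron ?x0 ?a0) (hone etaH) = ?U1 *\<^sub>v (?U2 *\<^sub>v vkron (vkron ?x0 ?a0) (vkron (unit_vec 1 0) (hone etaH)))"
    unfolding vkron_e0_left by (rule assoc_mult_mat_vec[OF U1c U2c]) (use x0a0 in simp)
  also have "?U2 *\<^sub>v vkron (vkron ?x0 ?a0) (vkron (unit_vec 1 0) (hone etaH)) = vkron ?x0 (hmul mH (al i *\<^sub>v ?a0) (al j *\<^sub>v hone etaH))"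
    by (simp only: H2_act'[OF x0 a0 e0u hone_c] vkron_e0_right)
  also have "?U1 *\<^sub>v \<dots> = vkron (?X1 *\<^sub>v ?x0) (hmul mH (al i *\<^sub>v ?a0) (al j *\<^sub>v hone etaH))"
    unfolding U1 by (rule kron1_act[OF X1 x0 hm_c])
  finally show ?thesis .
qed

lemma lunit_act:
  assumes X: "is_obj X" and x: "x \<in> carrier_vec (dim_row X)" and a: "a \<in> carrier_vec d"
  shows "(Hmor aH (lunit_mat j X) * H2 i j aH mH unit_obj X * kron (H0 etaH) (1\<^sub>m (dim_row (Hobj aH X)))
      * inv_mat (lunit_mat j (Hobj aH X))) *\<^sub>v vkron x a
    = vkron (mpow_int X (j+1) *\<^sub>v (mpow_int X (-(j+1)) *\<^sub>v x)) (hmul mH (al i *\<^sub>v hone etaH) (al j *\<^sub>v (al (-(j+1)) *\<^sub>v a)))"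
proof -
  let ?n = "dim_row X"
  let ?X1 = "mpow_int X (j+1)" and ?X0 = "mpow_int X (-(j+1))"
  have X1: "?X1 \<in> carrier_mat ?n ?n" and X0: "?X0 \<in> carrier_mat ?n ?n" using obj_mpow_c X by auto
  let ?U1 = "Hmor aH (lunit_mat j X)" and ?U2 = "H2 i j aH mH unit_obj X"
    and ?U3 = "kron (H0 etaH) (1\<^sub>m (dim_row (Hobj aH X)))" and ?U4 = "inv_mat (lunit_mat j (Hobj aH X))"
  have U1: "?U1 = kron ?X1 (1\<^sub>m d)" unfolding Hmor_def lunit_mat_def d ..
  have U3: "?U3 = kron etaH (1\<^sub>m (?n*d))" unfolding H0_eq Hobj_def dim_kron d ..
  have U4: "?U4 = kron ?X0 (al (-(j+1)))" unfolding lunit_mat_def by (rule inv_Hobj_mpow[OF X])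
  have un: "dim_row (unit_obj :: 'a mat) = 1" by (simp add: unit_obj_def)
  have U1c: "?U1 \<in> carrier_mat (?n*d) (?n*d)" unfolding U1 using kron_carrier[OF X1 one_carrier_mat] .
  have U2c: "?U2 \<in> carrier_mat (?n*d) (d*(?n*d))" using H2_c[of i j unit_obj X] unfolding un by simp
  have U3c: "?U3 \<in> carrier_mat (d*(?n*d)) (?n*d)" unfolding U3 using kron_carrier[OF etaH(1) one_carrier_mat] by simp
  have U4c: "?U4 \<in> carrier_mat (?n*d) (?n*d)" unfolding U4 using kron_carrier[OF X0 al_c] .
  have U12c: "?U1 * ?U2 \<in> carrier_mat (?n*d) (d*(?n*d))" using mult_carrier_mat[OF U1c U2c] .
  have U123c: "?U1 * ?U2 * ?U3 \<in> carrier_mat (?n*d) (?n*d)" using mult_carrier_mat[OF U12c U3c] .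
  have xa: "vkron x a \<in> carrier_vec (?n*d)" using x a by simp
  let ?x0 = "?X0 *\<^sub>v x" and ?a0 = "al (-(j+1)) *\<^sub>v a"
  have x0: "?x0 \<in> carrier_vec ?n" and a0: "?a0 \<in> carrier_vec d" using X0 x a by auto
  have x0a0: "vkron ?x0 ?a0 \<in> carrier_vec (?n*d)" using x0 a0 by simp
  have e0: "unit_vec 1 0 \<in> carrier_vec 1" by simp
  have e0u: "unit_vec 1 0 \<in> carrier_vec (dim_row (unit_obj :: 'a mat))" unfolding un by simp
  have "(?U1 * ?U2 * ?U3 * ?U4) *\<^sub>v vkron x a = (?U1 * ?U2 * ?U3) *\<^sub>v (?U4 *\<^sub>v vkron x a)"
    by (rule assoc_mult_mat_vec[OF U123c U4c xa])
  also have "?U4 *\<^sub>v vkron x a = vkron ?x0 ?a0" unfolding U4 by (rule kron_mult_vec[OF X0 al_c x a])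
  also have "(?U1 * ?U2 * ?U3) *\<^sub>v vkron ?x0 ?a0 = (?U1 * ?U2) *\<^sub>v (?U3 *\<^sub>v vkron ?x0 ?a0)"
    by (rule assoc_mult_mat_vec[OF U12c U3c]) (use x0a0 in simp)
  also have "?U3 *\<^sub>v vkron ?x0 ?a0 = vkron (hone etaH) (vkron ?x0 ?a0)"
  proof -
    have "?U3 *\<^sub>v vkron ?x0 ?a0 = kron etaH (1\<^sub>m (?n*d)) *\<^sub>v vkron (unit_vec 1 0) (vkron ?x0 ?a0)"
      unfolding U3 vkron_e0_left ..
    also have "\<dots> = vkron (hone etaH) (vkron ?x0 ?a0)"
      by (simp only: kron_mult_vec[OF etaH(1) one_carrier_mat e0 x0a0] one_mult_mat_vec[OF x0a0] hone_eta)
    finally show ?thesis .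
  qed
  also have "(?U1 * ?U2) *\<^sub>v vkron (hone etaH) (vkron ?x0 ?a0) = ?U1 *\<^sub>v (?U2 *\<^sub>v vkron (vkron (unit_vec 1 0) (hone etaH)) (vkron ?x0 ?a0))"
    unfolding vkron_e0_left by (rule assoc_mult_mat_vec[OF U1c U2c]) (use x0a0 in simp)
  also have "?U2 *\<^sub>v vkron (vkron (unit_vec 1 0) (hone etaH)) (vkron ?x0 ?a0) = vkron ?x0 (hmul mH (al i *\<^sub>v hone etaH) (al j *\<^sub>v ?a0))"
    by (subst H2_act'[OF e0u hone_c x0 a0]) (simp only: vkron_e0_left)
  also have "?U1 *\<^sub>v \<dots> = vkron (?X1 *\<^sub>v ?x0) (hmul mH (al i *\<^sub>v hone etaH) (al j *\<^sub>v ?a0))"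
    unfolding U1 by (rule kron1_act[OF X1 x0 hm_c])
  finally show ?thesis .
qed


lemma un_dim: "dim_row (unit_obj :: 'a mat) = 1" by (simp add: unit_obj_def)

lemma hexL_c:
  assumes X: "is_obj X" and Y: "is_obj Y" and Z: "is_obj Z"
  shows "H2 i j aH mH X (kron Y Z) * kron (1\<^sub>m (dim_row (Hobj aH X))) (H2 i j aH mH Y Z)
          * assoc_mat i j (Hobj aH X) (Hobj aH Y) (Hobj aH Z)
     \<in> carrier_mat (((dim_row X * dim_row Y) * dim_row Z) * d) (((dim_row X * d) * (dim_row Y * d)) * (dim_row Z * d))"
proof -
  let ?n = "dim_row X" and ?m = "dim_row Y" and ?l = "dim_row Z"
  let ?X1 = "mpow_int X (i+1)" and ?Z1 = "mpow_int Z (-j-1)"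
  have X1: "?X1 \<in> carrier_mat ?n ?n" and Z1: "?Z1 \<in> carrier_mat ?l ?l" using obj_mpow_c X Z by auto
  let ?AM = "assoc_mat i j (Hobj aH X) (Hobj aH Y) (Hobj aH Z)"
  have AMeq: "?AM = kron (kron (kron ?X1 (al (i+1))) (1\<^sub>m (?m*d))) (kron ?Z1 (al (-j-1)))"
    unfolding assoc_mat_def Hobj_mpow[OF X] Hobj_mpow[OF Z] by (simp add: Hobj_def d)
  let ?N = "(?n*d)*((?m*d)*(?l*d))"
  have AMc0: "?AM \<in> carrier_mat (((?n*d)*(?m*d))*(?l*d)) (((?n*d)*(?m*d))*(?l*d))"
    unfolding AMeq using kron_carrier[OF kron_carrier[OF kron_carrier[OF X1 al_c] one_carrier_mat] kron_carrier[OF Z1 al_c]] .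
  have NN: "((?n*d)*(?m*d))*(?l*d) = ?N" by (simp add: mult.assoc)
  have AMc: "?AM \<in> carrier_mat ?N (((?n*d)*(?m*d))*(?l*d))" using AMc0 unfolding NN .
  let ?K = "kron (1\<^sub>m (dim_row (Hobj aH X))) (H2 i j aH mH Y Z)"
  have Kc: "?K \<in> carrier_mat ((?n*d)*((?m*?l)*d)) ?N"
    unfolding Hobj_def dim_kron d[symmetric] using kron_carrier[OF one_carrier_mat H2_c] .
  let ?H = "H2 i j aH mH X (kron Y Z)"
  have Hc: "?H \<in> carrier_mat (((?n*?m)*?l)*d) ((?n*d)*((?m*?l)*d))"
    using H2_c[of i j X "kron Y Z"] by (simp add: mult.assoc)
  show ?thesis using mult_carrier_mat[OF mult_carrier_mat[OF Hc Kc] AMc] .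
qed

lemma hexR_c:
  assumes X: "is_obj X" and Y: "is_obj Y" and Z: "is_obj Z"
  shows "Hmor aH (assoc_mat i j X Y Z) * H2 i j aH mH (kron X Y) Z
          * kron (H2 i j aH mH X Y) (1\<^sub>m (dim_row (Hobj aH Z)))
     \<in> carrier_mat (((dim_row X * dim_row Y) * dim_row Z) * d) (((dim_row X * d) * (dim_row Y * d)) * (dim_row Z * d))"
proof -
  let ?n = "dim_row X" and ?m = "dim_row Y" and ?l = "dim_row Z"
  let ?X1 = "mpow_int X (i+1)" and ?Z1 = "mpow_int Z (-j-1)"
  have X1: "?X1 \<in> carrier_mat ?n ?n" and Z1: "?Z1 \<in> carrier_mat ?l ?l" using obj_mpow_c X Z by auto
  let ?R1 = "Hmor aH (assoc_mat i j X Y Z)" and ?R2 = "H2 i j aH mH (kron X Y) Z"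
    and ?R3 = "kron (H2 i j aH mH X Y) (1\<^sub>m (dim_row (Hobj aH Z)))"
  have R1eq: "?R1 = kron (kron (kron ?X1 (1\<^sub>m ?m)) ?Z1) (1\<^sub>m d)"
    unfolding Hmor_def assoc_mat_def d by simp
  have R1c: "?R1 \<in> carrier_mat (((?n*?m)*?l)*d) (((?n*?m)*?l)*d)"
    unfolding R1eq using kron_carrier[OF kron_carrier[OF kron_carrier[OF X1 one_carrier_mat] Z1] one_carrier_mat] .
  have R2c: "?R2 \<in> carrier_mat (((?n*?m)*?l)*d) (((?n*?m)*d)*(?l*d))"
    using H2_c[of i j "kron X Y" Z] by simp
  have R3c: "?R3 \<in> carrier_mat (((?n*?m)*d)*(?l*d)) (((?n*d)*(?m*d))*(?l*d))"
    unfolding Hobj_def dim_kron d[symmetric] using kron_carrier[OF H2_c one_carrier_mat] .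
  show ?thesis using mult_carrier_mat[OF mult_carrier_mat[OF R1c R2c] R3c] .
qed

lemma runit_c:
  assumes X: "is_obj X"
  shows "Hmor aH (runit_mat i X) * H2 i j aH mH X unit_obj * kron (1\<^sub>m (dim_row (Hobj aH X))) (H0 etaH)
      * inv_mat (runit_mat i (Hobj aH X)) \<in> carrier_mat (dim_row X * d) (dim_row X * d)"
proof -
  let ?n = "dim_row X"
  let ?X1 = "mpow_int X (i+1)" and ?X0 = "mpow_int X (-(i+1))"
  have X1: "?X1 \<in> carrier_mat ?n ?n" and X0: "?X0 \<in> carrier_mat ?n ?n" using obj_mpow_c X by auto
  let ?U1 = "Hmor aH (runit_mat i X)" and ?U2 = "H2 i j aH mH X unit_obj"
    and ?U3 = "kron (1\<^sub>m (dim_row (Hobj aH X))) (H0 etaH)" and ?U4 = "inv_mat (runit_mat i (Hobj aH X))"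
  have U1: "?U1 = kron ?X1 (1\<^sub>m d)" unfolding Hmor_def runit_mat_def d ..
  have U3: "?U3 = kron (1\<^sub>m (?n*d)) etaH" unfolding H0_eq Hobj_def dim_kron d ..
  have U4: "?U4 = kron ?X0 (al (-(i+1)))" unfolding runit_mat_def by (rule inv_Hobj_mpow[OF X])
  have U1c: "?U1 \<in> carrier_mat (?n*d) (?n*d)" unfolding U1 using kron_carrier[OF X1 one_carrier_mat] .
  have U2c: "?U2 \<in> carrier_mat (?n*d) ((?n*d)*d)" using H2_c[of i j X unit_obj] unfolding un_dim by simp
  have U3c: "?U3 \<in> carrier_mat ((?n*d)*d) (?n*d)" unfolding U3 using kron_carrier[OF one_carrier_mat etaH(1)] by simp
  have U4c: "?U4 \<in> carrier_mat (?n*d) (?n*d)" unfolding U4 using kron_carrier[OF X0 al_c] .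
  show ?thesis using mult_carrier_mat[OF mult_carrier_mat[OF mult_carrier_mat[OF U1c U2c] U3c] U4c] .
qed

lemma lunit_c:
  assumes X: "is_obj X"
  shows "Hmor aH (lunit_mat j X) * H2 i j aH mH unit_obj X * kron (H0 etaH) (1\<^sub>m (dim_row (Hobj aH X)))
      * inv_mat (lunit_mat j (Hobj aH X)) \<in> carrier_mat (dim_row X * d) (dim_row X * d)"
proof -
  let ?n = "dim_row X"
  let ?X1 = "mpow_int X (j+1)" and ?X0 = "mpow_int X (-(j+1))"
  have X1: "?X1 \<in> carrier_mat ?n ?n" and X0: "?X0 \<in> carrier_mat ?n ?n" using obj_mpow_c X by auto
  let ?U1 = "Hmor aH (lunit_mat j X)" and ?U2 = "H2 i j aH mH unit_obj X"
    and ?U3 = "kron (H0 etaH) (1\<^sub>m (dim_row (Hobj aH X)))" and ?U4 = "inv_mat (lunit_mat j (Hobj aH X))"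
  have U1: "?U1 = kron ?X1 (1\<^sub>m d)" unfolding Hmor_def lunit_mat_def d ..
  have U3: "?U3 = kron etaH (1\<^sub>m (?n*d))" unfolding H0_eq Hobj_def dim_kron d ..
  have U4: "?U4 = kron ?X0 (al (-(j+1)))" unfolding lunit_mat_def by (rule inv_Hobj_mpow[OF X])
  have U1c: "?U1 \<in> carrier_mat (?n*d) (?n*d)" unfolding U1 using kron_carrier[OF X1 one_carrier_mat] .
  have U2c: "?U2 \<in> carrier_mat (?n*d) (d*(?n*d))" using H2_c[of i j unit_obj X] unfolding un_dim by simp
  have U3c: "?U3 \<in> carrier_mat (d*(?n*d)) (?n*d)" unfolding U3 using kron_carrier[OF etaH(1) one_carrier_mat] by simp
  have U4c: "?U4 \<in> carrier_mat (?n*d) (?n*d)" unfolding U4 using kron_carrier[OF X0 al_c] .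
  show ?thesis using mult_carrier_mat[OF mult_carrier_mat[OF mult_carrier_mat[OF U1c U2c] U3c] U4c] .
qed

lemma aH_v: "v \<in> carrier_vec d \<Longrightarrow> aH *\<^sub>v v = al 1 *\<^sub>v v" by (simp add: mpow_1)

lemma obj_cancel: "is_obj X \<Longrightarrow> x \<in> carrier_vec (dim_row X) \<Longrightarrow> mpow_int X k *\<^sub>v (mpow_int X (-k) *\<^sub>v x) = x"
proof -
  assume X: "is_obj X" and x: "x \<in> carrier_vec (dim_row X)"
  interpret xx: inv_ctx X "dim_row X" using obj_c[OF X] obj_i[OF X] by unfold_locales
  show ?thesis using xx.mpow_vec[OF x, of k "-k"] xx.mpow_0_vec[OF x] by simp
qed

lemma unit_is_obj: "is_obj (unit_obj :: 'a mat)"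
proof -
  have "invertible_mat (1\<^sub>m 1 :: 'a mat) \<and> inv_mat (1\<^sub>m 1 :: 'a mat) = 1\<^sub>m 1"
    by (rule inv_mat_eq[of _ 1]) auto
  then show ?thesis unfolding is_obj_def unit_obj_def by auto
qed

lemma unit_mpow_e0: "mpow_int (unit_obj :: 'a mat) k *\<^sub>v unit_vec 1 0 = unit_vec 1 0"
  unfolding unit_obj_def mpow_one_mat by simp


lemma al_0v: "v \<in> carrier_vec d \<Longrightarrow> al 0 *\<^sub>v v = v" by (rule mpow_0_vec)

lemma al_eqv: "k = l \<Longrightarrow> al k *\<^sub>v v = al l *\<^sub>v v" by simp

lemma hex_alg_back:
  assumes HA: "\<And>a b c. a \<in> carrier_vec d \<Longrightarrow> b \<in> carrier_vec d \<Longrightarrow> c \<in> carrier_vec d \<Longrightarrow>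
      hmul mH (aH *\<^sub>v a) (hmul mH b c) = hmul mH (hmul mH a b) (aH *\<^sub>v c)"
    and a: "a \<in> carrier_vec d" and b: "b \<in> carrier_vec d" and c: "c \<in> carrier_vec d"
  shows "hmul mH (al i *\<^sub>v (al (i+1) *\<^sub>v a)) (al j *\<^sub>v hmul mH (al i *\<^sub>v b) (al j *\<^sub>v (al (-j-1) *\<^sub>v c)))
       = hmul mH (al i *\<^sub>v hmul mH (al i *\<^sub>v a) (al j *\<^sub>v b)) (al j *\<^sub>v c)"
proof -
  let ?A = "al (i+i) *\<^sub>v a" and ?B = "al (i+j) *\<^sub>v b" and ?C = "al (j-1) *\<^sub>v c"
  have A: "?A \<in> carrier_vec d" and B: "?B \<in> carrier_vec d" and C: "?C \<in> carrier_vec d" using a b c by auto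
  have 1: "al i *\<^sub>v (al (i+1) *\<^sub>v a) = aH *\<^sub>v ?A"
    using a by (simp add: al_al aH_v, intro al_eqv) simp
  have 2: "al j *\<^sub>v hmul mH (al i *\<^sub>v b) (al j *\<^sub>v (al (-j-1) *\<^sub>v c)) = hmul mH ?B ?C"
    using b c by (simp add: al_al al_hom add.commute)
  have 3: "al i *\<^sub>v hmul mH (al i *\<^sub>v a) (al j *\<^sub>v b) = hmul mH ?A ?B"
    using a b by (simp add: al_al al_hom)
  have 4: "al j *\<^sub>v c = aH *\<^sub>v ?C"
    using c by (simp add: al_al aH_v)
  show ?thesis unfolding 1 2 3 4 by (rule HA[OF A B C])
qed


lemma hex_alg_fwd:
  assumes EQ: "\<And>a b c. a \<in> carrier_vec d \<Longrightarrow> b \<in> carrier_vec d \<Longrightarrow> c \<in> carrier_vec d \<Longrightarrow>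
      hmul mH (al i *\<^sub>v (al (i+1) *\<^sub>v a)) (al j *\<^sub>v hmul mH (al i *\<^sub>v b) (al j *\<^sub>v (al (-j-1) *\<^sub>v c)))
       = hmul mH (al i *\<^sub>v hmul mH (al i *\<^sub>v a) (al j *\<^sub>v b)) (al j *\<^sub>v c)"
    and a: "a \<in> carrier_vec d" and b: "b \<in> carrier_vec d" and c: "c \<in> carrier_vec d"
  shows "hmul mH (aH *\<^sub>v a) (hmul mH b c) = hmul mH (hmul mH a b) (aH *\<^sub>v c)"
proof -
  let ?a = "al (-(i+i)) *\<^sub>v a" and ?b = "al (-(i+j)) *\<^sub>v b" and ?c = "al (1-j) *\<^sub>v c"
  have A: "?a \<in> carrier_vec d" and B: "?b \<in> carrier_vec d" and C: "?c \<in> carrier_vec d" using a b c by auto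
  have 1: "al i *\<^sub>v (al (i+1) *\<^sub>v ?a) = aH *\<^sub>v a"
    using a by (simp add: al_al aH_v)
  have 2: "al j *\<^sub>v hmul mH (al i *\<^sub>v ?b) (al j *\<^sub>v (al (-j-1) *\<^sub>v ?c)) = hmul mH b c"
    using b c by (simp add: al_al al_hom al_0v)
  have 3: "al i *\<^sub>v hmul mH (al i *\<^sub>v ?a) (al j *\<^sub>v ?b) = hmul mH a b"
    using a b by (simp add: al_al al_hom al_0v)
  have 4: "al j *\<^sub>v ?c = aH *\<^sub>v c"
    using c by (simp add: al_al aH_v)
  show ?thesis using EQ[OF A B C] unfolding 1 2 3 4 .
qed

lemma ru_back: "(\<And>u. u \<in> carrier_vec d \<Longrightarrow> hmul mH u (hone etaH) = aH *\<^sub>v u) \<Longrightarrow> a \<in> carrier_vec d \<Longrightarrow>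
    hmul mH (al i *\<^sub>v (al (-(i+1)) *\<^sub>v a)) (al j *\<^sub>v hone etaH) = a"
  by (simp add: al_hone al_al aH_v al_0v)

lemma lu_back: "(\<And>u. u \<in> carrier_vec d \<Longrightarrow> hmul mH (hone etaH) u = aH *\<^sub>v u) \<Longrightarrow> a \<in> carrier_vec d \<Longrightarrow>
    hmul mH (al i *\<^sub>v hone etaH) (al j *\<^sub>v (al (-(j+1)) *\<^sub>v a)) = a"
  by (simp add: al_hone al_al aH_v al_0v)

lemma ru_fwd:
  assumes "\<And>a. a \<in> carrier_vec d \<Longrightarrow> hmul mH (al i *\<^sub>v (al (-(i+1)) *\<^sub>v a)) (al j *\<^sub>v hone etaH) = a"
    and u: "u \<in> carrier_vec d"
  shows "hmul mH u (hone etaH) = aH *\<^sub>v u"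
  using assms(1)[of "aH *\<^sub>v u"] u by (simp add: al_hone al_al aH_v al_0v)

lemma lu_fwd:
  assumes "\<And>a. a \<in> carrier_vec d \<Longrightarrow> hmul mH (al i *\<^sub>v hone etaH) (al j *\<^sub>v (al (-(j+1)) *\<^sub>v a)) = a"
    and u: "u \<in> carrier_vec d"
  shows "hmul mH (hone etaH) u = aH *\<^sub>v u"
  using assms(1)[of "aH *\<^sub>v u"] u by (simp add: al_hone al_al aH_v al_0v)


lemma hobj_dim: "dim_row (Hobj aH X) = dim_row X * d" unfolding Hobj_def dim_kron d ..

lemma backward:
  assumes HA: "hom_algebra aH mH etaH"
  shows "monoidal_functor_Hdd i j aH mH etaH"
proof -
  have assoc: "\<And>a b c. a \<in> carrier_vec d \<Longrightarrow> b \<in> carrier_vec d \<Longrightarrow> c \<in> carrier_vec d \<Longrightarrow>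
      hmul mH (aH *\<^sub>v a) (hmul mH b c) = hmul mH (hmul mH a b) (aH *\<^sub>v c)"
    using HA unfolding hom_algebra_def d[symmetric] by blast
  have runit: "\<And>u. u \<in> carrier_vec d \<Longrightarrow> hmul mH u (hone etaH) = aH *\<^sub>v u"
    using HA unfolding hom_algebra_def d[symmetric] by blast
  have lunit: "\<And>u. u \<in> carrier_vec d \<Longrightarrow> hmul mH (hone etaH) u = aH *\<^sub>v u"
    using HA unfolding hom_algebra_def d[symmetric] by blast
  have P1: "\<forall>X Y. is_obj X \<longrightarrow> is_obj Y \<longrightarrow>
        is_mor (kron (Hobj aH X) (Hobj aH Y)) (Hobj aH (kron X Y)) (H2 i j aH mH X Y)"
    using comp_morph by blast
  have P2: "is_mor unit_obj (Hobj aH unit_obj) (H0 etaH)"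
    unfolding H0_eq using mor_e unfolding Hobj_def unit_obj_def kron_one_left .
  have P3: "\<forall>X X' Y Y' f g. is_obj X \<longrightarrow> is_obj X' \<longrightarrow> is_obj Y \<longrightarrow> is_obj Y' \<longrightarrow>
        is_mor X X' f \<longrightarrow> is_mor Y Y' g \<longrightarrow>
        H2 i j aH mH X' Y' * kron (Hmor aH f) (Hmor aH g) = Hmor aH (kron f g) * H2 i j aH mH X Y"
    using comp_nat by blast
  have P4: "\<forall>X Y Z. is_obj X \<longrightarrow> is_obj Y \<longrightarrow> is_obj Z \<longrightarrow>
        H2 i j aH mH X (kron Y Z) * kron (1\<^sub>m (dim_row (Hobj aH X))) (H2 i j aH mH Y Z)
          * assoc_mat i j (Hobj aH X) (Hobj aH Y) (Hobj aH Z)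
        = Hmor aH (assoc_mat i j X Y Z) * H2 i j aH mH (kron X Y) Z
          * kron (H2 i j aH mH X Y) (1\<^sub>m (dim_row (Hobj aH Z)))"
  proof (intro allI impI)
    fix X Y Z :: "'a mat" assume X: "is_obj X" and Y: "is_obj Y" and Z: "is_obj Z"
    show "H2 i j aH mH X (kron Y Z) * kron (1\<^sub>m (dim_row (Hobj aH X))) (H2 i j aH mH Y Z)
          * assoc_mat i j (Hobj aH X) (Hobj aH Y) (Hobj aH Z)
        = Hmor aH (assoc_mat i j X Y Z) * H2 i j aH mH (kron X Y) Z
          * kron (H2 i j aH mH X Y) (1\<^sub>m (dim_row (Hobj aH Z)))"
    proof (rule mat_eq_t6[OF hexL_c[OF X Y Z] hexR_c[OF X Y Z]])
      fix x a y b z c :: "'a vec"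
      assume x: "x \<in> carrier_vec (dim_row X)" and a: "a \<in> carrier_vec d" and y: "y \<in> carrier_vec (dim_row Y)"
        and b: "b \<in> carrier_vec d" and z: "z \<in> carrier_vec (dim_row Z)" and c: "c \<in> carrier_vec d"
      show "(H2 i j aH mH X (kron Y Z) * kron (1\<^sub>m (dim_row (Hobj aH X))) (H2 i j aH mH Y Z)
          * assoc_mat i j (Hobj aH X) (Hobj aH Y) (Hobj aH Z)) *\<^sub>v vkron (vkron (vkron x a) (vkron y b)) (vkron z c)
        = (Hmor aH (assoc_mat i j X Y Z) * H2 i j aH mH (kron X Y) Z
          * kron (H2 i j aH mH X Y) (1\<^sub>m (dim_row (Hobj aH Z)))) *\<^sub>v vkron (vkron (vkron x a) (vkron y b)) (vkron z c)"
        by (subst hex_L[OF X Y Z x y z a b c], subst hex_R[OF X Y Z x y z a b c], subst hex_alg_back[OF assoc a b c]) simp_all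
    qed
  qed
  have P5: "\<forall>X. is_obj X \<longrightarrow>
        Hmor aH (runit_mat i X) * H2 i j aH mH X unit_obj
          * kron (1\<^sub>m (dim_row (Hobj aH X))) (H0 etaH) * inv_mat (runit_mat i (Hobj aH X))
          = 1\<^sub>m (dim_row (Hobj aH X)) \<and>
        Hmor aH (lunit_mat j X) * H2 i j aH mH unit_obj X
          * kron (H0 etaH) (1\<^sub>m (dim_row (Hobj aH X))) * inv_mat (lunit_mat j (Hobj aH X))
          = 1\<^sub>m (dim_row (Hobj aH X))"
  proof (intro allI impI conjI)
    fix X :: "'a mat" assume X: "is_obj X"
    show "Hmor aH (runit_mat i X) * H2 i j aH mH X unit_obj
          * kron (1\<^sub>m (dim_row (Hobj aH X))) (H0 etaH) * inv_mat (runit_mat i (Hobj aH X))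
          = 1\<^sub>m (dim_row (Hobj aH X))"
      unfolding hobj_dim[of X]
    proof (rule mat_eq_t2[OF runit_c[OF X, unfolded hobj_dim] one_carrier_mat])
      fix x a :: "'a vec" assume x: "x \<in> carrier_vec (dim_row X)" and a: "a \<in> carrier_vec d"
      show "(Hmor aH (runit_mat i X) * H2 i j aH mH X unit_obj * kron (1\<^sub>m (dim_row X * d)) (H0 etaH)
          * inv_mat (runit_mat i (Hobj aH X))) *\<^sub>v vkron x a = 1\<^sub>m (dim_row X * d) *\<^sub>v vkron x a"
        using runit_act[OF X x a, unfolded hobj_dim] obj_cancel[OF X x, of "i+1"] ru_back[OF runit a] vkron_carrier[OF x a]
        by simp
    qed
    show "Hmor aH (lunit_mat j X) * H2 i j aH mH unit_obj X
          * kron (H0 etaH) (1\<^sub>m (dim_row (Hobj aH X))) * inv_mat (lunit_mat j (Hobj aH X))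
          = 1\<^sub>m (dim_row (Hobj aH X))"
      unfolding hobj_dim[of X]
    proof (rule mat_eq_t2[OF lunit_c[OF X, unfolded hobj_dim] one_carrier_mat])
      fix x a :: "'a vec" assume x: "x \<in> carrier_vec (dim_row X)" and a: "a \<in> carrier_vec d"
      show "(Hmor aH (lunit_mat j X) * H2 i j aH mH unit_obj X * kron (H0 etaH) (1\<^sub>m (dim_row X * d))
          * inv_mat (lunit_mat j (Hobj aH X))) *\<^sub>v vkron x a = 1\<^sub>m (dim_row X * d) *\<^sub>v vkron x a"
        using lunit_act[OF X x a, unfolded hobj_dim] obj_cancel[OF X x, of "j+1"] lu_back[OF lunit a] vkron_carrier[OF x a]
        by simp
    qed
  qed
  show ?thesis unfolding monoidal_functor_Hdd_def using P1 P2 P3 P4 P5 by blast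
qed


lemma forward:
  assumes MF: "monoidal_functor_Hdd i j aH mH etaH"
  shows "hom_algebra aH mH etaH"
proof -
  let ?U = "unit_obj :: 'a mat" and ?e = "unit_vec 1 0 :: 'a vec"
  have U: "is_obj ?U" by (rule unit_is_obj)
  have e: "?e \<in> carrier_vec (dim_row ?U)" unfolding un_dim by simp
  have H4: "H2 i j aH mH ?U (kron ?U ?U) * kron (1\<^sub>m (dim_row (Hobj aH ?U))) (H2 i j aH mH ?U ?U)
          * assoc_mat i j (Hobj aH ?U) (Hobj aH ?U) (Hobj aH ?U)
        = Hmor aH (assoc_mat i j ?U ?U ?U) * H2 i j aH mH (kron ?U ?U) ?U
          * kron (H2 i j aH mH ?U ?U) (1\<^sub>m (dim_row (Hobj aH ?U)))"
    using MF U unfolding monoidal_functor_Hdd_def by blast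
  have H5: "Hmor aH (runit_mat i ?U) * H2 i j aH mH ?U unit_obj
          * kron (1\<^sub>m (dim_row (Hobj aH ?U))) (H0 etaH) * inv_mat (runit_mat i (Hobj aH ?U))
          = 1\<^sub>m (dim_row (Hobj aH ?U)) \<and>
        Hmor aH (lunit_mat j ?U) * H2 i j aH mH unit_obj ?U
          * kron (H0 etaH) (1\<^sub>m (dim_row (Hobj aH ?U))) * inv_mat (lunit_mat j (Hobj aH ?U))
          = 1\<^sub>m (dim_row (Hobj aH ?U))"
    using MF U unfolding monoidal_functor_Hdd_def by blast
  have EQ: "hmul mH (al i *\<^sub>v (al (i+1) *\<^sub>v a)) (al j *\<^sub>v hmul mH (al i *\<^sub>v b) (al j *\<^sub>v (al (-j-1) *\<^sub>v c)))
       = hmul mH (al i *\<^sub>v hmul mH (al i *\<^sub>v a) (al j *\<^sub>v b)) (al j *\<^sub>v c)"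
    if a: "a \<in> carrier_vec d" and b: "b \<in> carrier_vec d" and c: "c \<in> carrier_vec d" for a b c
  proof -
    have "vkron (vkron (mpow_int ?U (i+1) *\<^sub>v ?e) (vkron ?e (mpow_int ?U (-j-1) *\<^sub>v ?e)))
        (hmul mH (al i *\<^sub>v (al (i+1) *\<^sub>v a)) (al j *\<^sub>v hmul mH (al i *\<^sub>v b) (al j *\<^sub>v (al (-j-1) *\<^sub>v c))))
      = vkron (vkron (mpow_int ?U (i+1) *\<^sub>v ?e) (vkron ?e (mpow_int ?U (-j-1) *\<^sub>v ?e)))
        (hmul mH (al i *\<^sub>v hmul mH (al i *\<^sub>v a) (al j *\<^sub>v b)) (al j *\<^sub>v c))"
      unfolding hex_L[OF U U U e e e a b c, symmetric] hex_R[OF U U U e e e a b c, symmetric] H4 ..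
    then show ?thesis by (simp only: unit_mpow_e0 vkron_e0_left)
  qed
  have RU: "hmul mH (al i *\<^sub>v (al (-(i+1)) *\<^sub>v a)) (al j *\<^sub>v hone etaH) = a" if a: "a \<in> carrier_vec d" for a
  proof -
    have ea: "vkron ?e a \<in> carrier_vec (dim_row (Hobj aH ?U))" unfolding hobj_dim un_dim using vkron_carrier[OF _ a, of ?e 1] by simp
    have "vkron (mpow_int ?U (i+1) *\<^sub>v (mpow_int ?U (-(i+1)) *\<^sub>v ?e)) (hmul mH (al i *\<^sub>v (al (-(i+1)) *\<^sub>v a)) (al j *\<^sub>v hone etaH))
      = vkron ?e a"
      unfolding runit_act[OF U e a, symmetric] conjunct1[OF H5] using one_mult_mat_vec[OF ea] .
    then show ?thesis by (simp only: unit_mpow_e0 vkron_e0_left)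
  qed
  have LU: "hmul mH (al i *\<^sub>v hone etaH) (al j *\<^sub>v (al (-(j+1)) *\<^sub>v a)) = a" if a: "a \<in> carrier_vec d" for a
  proof -
    have ea: "vkron ?e a \<in> carrier_vec (dim_row (Hobj aH ?U))" unfolding hobj_dim un_dim using vkron_carrier[OF _ a, of ?e 1] by simp
    have "vkron (mpow_int ?U (j+1) *\<^sub>v (mpow_int ?U (-(j+1)) *\<^sub>v ?e)) (hmul mH (al i *\<^sub>v hone etaH) (al j *\<^sub>v (al (-(j+1)) *\<^sub>v a)))
      = vkron ?e a"
      unfolding lunit_act[OF U e a, symmetric] conjunct2[OF H5] using one_mult_mat_vec[OF ea] .
    then show ?thesis by (simp only: unit_mpow_e0 vkron_e0_left)
  qed
  show ?thesis unfolding hom_algebra_def d[symmetric]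
    using hex_alg_fwd[OF EQ] aH_hone ru_fwd[OF RU] lu_fwd[OF LU] by blast
qed

end


theorem lemma4p2:
  fixes i j :: int
    and aH mH etaH :: "'a::field_char_0 mat"
  assumes "is_obj aH"
    and "is_mor (kron aH aH) aH mH"
    and "is_mor unit_obj aH etaH"
  shows "monoidal_functor_Hdd i j aH mH etaH \<longleftrightarrow> hom_algebra aH mH etaH"
proof -
  interpret hctx aH mH etaH "dim_row aH"
    by unfold_locales (use assms in auto)
  show ?thesis using forward backward by blast
qed

end
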